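(* Let $f(n)$ denote the number of Wilf partitions of the positive integer $n$, and let $F(n)$ denote the number of Wilf partitions of $n$ that are fixed points of the involution $\iota$ (defined in the context). Then, as $n \to \infty$, $$\log F(n) \sim \frac12 \log f(n) \sim \frac16 (6n)^{1/3} \log n.$$
   Context: A Wilf partition of a positive integer $n$ is an integer partition of $n$ in which all nonzero multiplicities are distinct. Writing a partition as the set of its part–multiplicity pairs $(p_i,m_i)$ (meaning the part $p_i$ occurs exactly $m_i\ge 1$ times, the $p_i$ being distinct), a Wilf partition has distinct $p_i$ and distinct $m_i$. The involution $\iota$ on Wilf partitions of $n$ interchanges part sizes and multiplicities: it sends the partition with pairs $\{(p_i,m_i)\}$ to the partition with pairs $\{(m_i,p_i)\}$ (which is again a Wilf partition of $n$ since $\sum p_i m_i = n$). A fixed point of $\iota$ is a Wilf partition such that whenever $(p,m)$ is one of its part–multiplicity pairs, so is $(m,p)$. Here $a(n)\sim b(n)$ means $a(n)/b(n)\to 1$. *)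

theory Defs
  imports "HOL-Analysis.Analysis" "HOL-Library.Landau_Symbols"
begin

text \<open>A partition of n is encoded by the finite set of its part-multiplicity pairs (p,m):
  part p occurs exactly m >= 1 times; the parts p are distinct.\<close>

definition wilf_partition :: "nat \<Rightarrow> (nat \<times> nat) set \<Rightarrow> bool" where
  "wilf_partition n P \<longleftrightarrow>
     finite P \<and>
     (\<forall>(p, m) \<in> P. p \<ge> 1 \<and> m \<ge> 1) \<and>
     inj_on fst P \<and> inj_on snd P \<and>
     (\<Sum>(p, m) \<in> P. p * m) = n"

definition wilf_partitions :: "nat \<Rightarrow> (nat \<times> nat) set set" where
  "wilf_partitions n = {P. wilf_partition n P}"

definition iota :: "(nat \<times> nat) set \<Rightarrow> (nat \<times> nat) set" where
  "iota P = (\<lambda>(p, m). (m, p)) ` P"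

definition wilf_count :: "nat \<Rightarrow> nat" where
  "wilf_count n = card (wilf_partitions n)"

definition wilf_fixed_count :: "nat \<Rightarrow> nat" where
  "wilf_fixed_count n = card {P \<in> wilf_partitions n. iota P = P}"

end

theory Submission
  imports Defs "HOL-Combinatorics.Permutations" "HOL-Real_Asymp.Real_Asymp"
begin

lemma pow_div_fact_le_exp:
  fixes x :: real assumes "x \<ge> 0" shows "x ^ k / fact k \<le> exp x"
proof -
  have s: "(\<lambda>n. x^n /\<^sub>R fact n) sums exp x" by (rule exp_converges)
  have "sum (\<lambda>n. x^n /\<^sub>R fact n) {k} \<le> suminf (\<lambda>n. x^n /\<^sub>R fact n)"
    by (rule sum_le_suminf) (use s assms in \<open>auto simp: sums_iff\<close>)
  thus ?thesis using s by (simp add: sums_iff divide_inverse mult.commute)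
qed

lemma fact_ge_pow: "(real k / exp 1) ^ k \<le> fact k"
proof -
  have "real k ^ k / fact k \<le> exp (real k)" by (rule pow_div_fact_le_exp) simp
  hence "real k ^ k \<le> exp (real k) * fact k" by (simp add: field_simps)
  moreover have "exp (real k) = exp 1 ^ k" by (simp add: exp_of_nat_mult[symmetric])
  ultimately show ?thesis by (simp add: power_divide field_simps)
qed

lemma ln_le_div_e: fixes y :: real assumes "y > 0" shows "ln y \<le> y / exp 1"
proof -
  have "ln (y / exp 1) \<le> y / exp 1 - 1" using assms by (intro ln_le_minus_one) simp
  moreover have "ln (y / exp 1) = ln y - 1" using assms by (simp add: ln_div)
  ultimately show ?thesis by simp
qed

lemma pow_div_le_exp:
  fixes x :: real assumes "x \<ge> 0" shows "(x / real k) ^ k \<le> exp (x / exp 1)"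
proof (cases "k = 0 \<or> x = 0")
  case True thus ?thesis using assms by (auto simp: power_0_left)
next
  case False
  hence k: "k > 0" and x: "x > 0" using assms by auto
  have "ln ((x / real k) ^ k) = real k * ln (x / real k)" using k x by (simp add: ln_realpow)
  also have "\<dots> \<le> real k * ((x / real k) / exp 1)"
    using k x by (intro mult_left_mono ln_le_div_e) auto
  also have "\<dots> = x / exp 1" using k by simp
  finally have "ln ((x / real k) ^ k) \<le> x / exp 1" .
  hence "exp (ln ((x / real k) ^ k)) \<le> exp (x / exp 1)" by simp
  thus ?thesis using k x by simp
qed

lemma harm_le_ln: "n \<ge> 1 \<Longrightarrow> (\<Sum>p\<in>{1..n}. 1 / real p) \<le> 1 + ln (real n)"
proof (induction n rule: dec_induct)
  case base thus ?case by simp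
next
  case (step n)
  have "1 / real (Suc n) \<le> ln (real (Suc n)) - ln (real n)"
  proof -
    have "ln (real n / real (Suc n)) \<le> real n / real (Suc n) - 1"
      using step by (intro ln_le_minus_one) auto
    moreover have "ln (real n / real (Suc n)) = ln (real n) - ln (real (Suc n))"
      using step by (simp add: ln_div)
    moreover have "real n / real (Suc n) - 1 = - (1 / real (Suc n))" by (simp add: field_simps)
    ultimately show ?thesis by linarith
  qed
  thus ?case using step by (simp add: sum.cl_ivl_Suc)
qed

lemma bern: fixes S y :: real assumes "S \<ge> 0" "y \<ge> 0"
  shows "S ^ Suc m + real (Suc m) * y * S ^ m \<le> (S + y) ^ Suc m"
proof (induction m)
  case 0 thus ?case by simp
next
  case (Suc m)
  have "S ^ Suc (Suc m) + real (Suc (Suc m)) * y * S ^ Suc m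
      \<le> (S + y) * (S ^ Suc m + real (Suc m) * y * S ^ m)"
    using assms by (simp add: algebra_simps)
  also have "\<dots> \<le> (S + y) * (S + y) ^ Suc m" using Suc assms by (intro mult_left_mono) auto
  finally show ?case by simp
qed

definition esym :: "('a \<Rightarrow> real) \<Rightarrow> 'a set \<Rightarrow> nat \<Rightarrow> real" where
  "esym x U k = (\<Sum>Q\<in>{Q. Q \<subseteq> U \<and> card Q = k}. \<Prod>u\<in>Q. x u)"

lemma esym_0: "finite U \<Longrightarrow> esym x U 0 = 1"
proof -
  assume U: "finite U"
  have "{Q. Q \<subseteq> U \<and> card Q = 0} = {{}}"
  proof (intro equalityI subsetI)
    fix Q assume "Q \<in> {Q. Q \<subseteq> U \<and> card Q = 0}"
    hence "finite Q" "card Q = 0" using finite_subset U by auto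
    thus "Q \<in> {{}}" by simp
  qed simp
  thus ?thesis by (simp add: esym_def)
qed

lemma subsets_insert:
  assumes U: "finite U" and a: "a \<notin> U"
  shows "{Q. Q \<subseteq> insert a U \<and> card Q = Suc j} =
         {Q. Q \<subseteq> U \<and> card Q = Suc j} \<union> insert a ` {Q. Q \<subseteq> U \<and> card Q = j}"
proof (intro equalityI subsetI)
  fix Q assume "Q \<in> {Q. Q \<subseteq> insert a U \<and> card Q = Suc j}"
  hence Q: "Q \<subseteq> insert a U" "card Q = Suc j" by auto
  have fQ: "finite Q" using Q(1) U finite_subset by blast
  show "Q \<in> {Q. Q \<subseteq> U \<and> card Q = Suc j} \<union> insert a ` {Q. Q \<subseteq> U \<and> card Q = j}"
  proof (cases "a \<in> Q")
    case True
    have "Q = insert a (Q - {a})" using True by auto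
    moreover have "Q - {a} \<subseteq> U" "card (Q - {a}) = j" using Q True fQ by auto
    ultimately show ?thesis by blast
  next
    case False thus ?thesis using Q by auto
  qed
next
  fix Q assume "Q \<in> {Q. Q \<subseteq> U \<and> card Q = Suc j} \<union> insert a ` {Q. Q \<subseteq> U \<and> card Q = j}"
  thus "Q \<in> {Q. Q \<subseteq> insert a U \<and> card Q = Suc j}"
  proof
    assume "Q \<in> insert a ` {Q. Q \<subseteq> U \<and> card Q = j}"
    then obtain R where R: "R \<subseteq> U" "card R = j" "Q = insert a R" by auto
    have "finite R" using R U finite_subset by blast
    moreover have "a \<notin> R" using R a by auto
    ultimately show ?thesis using R a by auto
  qed auto
qed

lemma esym_insert:
  assumes U: "finite U" and a: "a \<notin> U"
  shows "esym x (insert a U) (Suc j) = esym x U (Suc j) + x a * esym x U j"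
proof -
  have fin1: "finite {Q. Q \<subseteq> U \<and> card Q = Suc j}" using U by simp
  have fin2: "finite {Q. Q \<subseteq> U \<and> card Q = j}" using U by simp
  have disj: "{Q. Q \<subseteq> U \<and> card Q = Suc j} \<inter> insert a ` {Q. Q \<subseteq> U \<and> card Q = j} = {}"
    using a by auto
  have inj: "inj_on (insert a) {Q. Q \<subseteq> U \<and> card Q = j}"
    using a by (auto simp: inj_on_def)
  have "esym x (insert a U) (Suc j) = esym x U (Suc j) +
          (\<Sum>Q\<in>insert a ` {Q. Q \<subseteq> U \<and> card Q = j}. \<Prod>u\<in>Q. x u)"
    unfolding esym_def subsets_insert[OF U a]
    by (rule sum.union_disjoint) (use fin1 fin2 disj in auto)
  also have "(\<Sum>Q\<in>insert a ` {Q. Q \<subseteq> U \<and> card Q = j}. \<Prod>u\<in>Q. x u)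
      = (\<Sum>Q\<in>{Q. Q \<subseteq> U \<and> card Q = j}. \<Prod>u\<in>insert a Q. x u)"
    by (rule sum.reindex[OF inj, unfolded comp_def])
  also have "\<dots> = (\<Sum>Q\<in>{Q. Q \<subseteq> U \<and> card Q = j}. x a * (\<Prod>u\<in>Q. x u))"
  proof (rule sum.cong[OF refl])
    fix Q assume "Q \<in> {Q. Q \<subseteq> U \<and> card Q = j}"
    hence "finite Q" "a \<notin> Q" using U a finite_subset by auto
    thus "(\<Prod>u\<in>insert a Q. x u) = x a * (\<Prod>u\<in>Q. x u)" by simp
  qed
  also have "\<dots> = x a * esym x U j" by (simp add: esym_def sum_distrib_left)
  finally show ?thesis .
qed

lemma esym_nonneg: "(\<And>u. u \<in> U \<Longrightarrow> x u \<ge> 0) \<Longrightarrow> esym x U k \<ge> 0"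
  unfolding esym_def by (intro sum_nonneg prod_nonneg) auto

lemma esym_bound:
  assumes "finite U" "\<And>u. u \<in> U \<Longrightarrow> x u \<ge> 0"
  shows "esym x U k * fact k \<le> (\<Sum>u\<in>U. x u) ^ k"
  using assms
proof (induction U arbitrary: k rule: finite_induct)
  case empty
  show ?case
  proof (cases k)
    case 0 thus ?thesis by (simp add: esym_0)
  next
    case (Suc j)
    have "{Q. Q \<subseteq> {} \<and> card Q = k} = {}" using Suc by auto
    hence "esym x {} k = 0" unfolding esym_def by (metis sum.empty)
    thus ?thesis using Suc by simp
  qed
next
  case (insert a U)
  show ?case
  proof (cases k)
    case 0 thus ?thesis using insert by (simp add: esym_0)
  next
    case (Suc j)
    let ?S = "\<Sum>u\<in>U. x u"
    have xa: "x a \<ge> 0" using insert by auto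
    have S0: "?S \<ge> 0" using insert by (intro sum_nonneg) auto
    have IH1: "esym x U (Suc j) * fact (Suc j) \<le> ?S ^ Suc j" using insert(3)[of "Suc j"] insert(4) by blast
    have IH2: "esym x U j * fact j \<le> ?S ^ j" using insert(3)[of j] insert(4) by blast
    have "esym x (insert a U) k * fact k
        = esym x U (Suc j) * fact (Suc j) + real (Suc j) * x a * (esym x U j * fact j)"
      using Suc esym_insert[OF insert(1,2)] by (simp add: algebra_simps)
    also have "\<dots> \<le> ?S ^ Suc j + real (Suc j) * x a * ?S ^ j"
      using IH1 IH2 xa by (intro add_mono mult_left_mono) auto
    also have "\<dots> \<le> (?S + x a) ^ Suc j" by (rule bern[OF S0 xa])
    finally show ?thesis using Suc insert by (simp add: add.commute)
  qed
qed

lemma count_bound: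
  fixes w :: "'a \<Rightarrow> real"
  assumes U: "finite U" and t: "t \<ge> 0"
  shows "real (card {Q. Q \<subseteq> U \<and> card Q = k \<and> (\<Sum>u\<in>Q. w u) \<le> N}) * fact k
         \<le> exp (t * N) * (\<Sum>u\<in>U. exp (- t * w u)) ^ k"
proof -
  let ?F = "{Q. Q \<subseteq> U \<and> card Q = k \<and> (\<Sum>u\<in>Q. w u) \<le> N}"
  let ?G = "{Q. Q \<subseteq> U \<and> card Q = k}"
  have fG: "finite ?G" using U by simp
  have "real (card ?F) = (\<Sum>Q\<in>?F. 1)" by simp
  also have "\<dots> \<le> (\<Sum>Q\<in>?F. exp (t * N) * (\<Prod>u\<in>Q. exp (- t * w u)))"
  proof (rule sum_mono)
    fix Q assume Q: "Q \<in> ?F"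
    have fQ: "finite Q" using Q U finite_subset by auto
    have "(\<Prod>u\<in>Q. exp (- t * w u)) = exp (- t * (\<Sum>u\<in>Q. w u))"
      using fQ by (simp add: exp_sum sum_distrib_left)
    hence "exp (t * N) * (\<Prod>u\<in>Q. exp (- t * w u)) = exp (t * (N - (\<Sum>u\<in>Q. w u)))"
      by (simp add: mult_exp_exp algebra_simps)
    moreover have "t * (N - (\<Sum>u\<in>Q. w u)) \<ge> 0" using Q t by auto
    ultimately show "1 \<le> exp (t * N) * (\<Prod>u\<in>Q. exp (- t * w u))" by simp
  qed
  also have "\<dots> \<le> (\<Sum>Q\<in>?G. exp (t * N) * (\<Prod>u\<in>Q. exp (- t * w u)))"
    by (rule sum_mono2[OF fG]) (auto intro!: prod_nonneg mult_nonneg_nonneg)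
  also have "\<dots> = exp (t * N) * esym (\<lambda>u. exp (- t * w u)) U k"
    by (simp add: esym_def sum_distrib_left)
  finally have "real (card ?F) * fact k \<le> exp (t * N) * (esym (\<lambda>u. exp (- t * w u)) U k * fact k)"
    by (simp add: mult_right_mono)
  also have "\<dots> \<le> exp (t * N) * (\<Sum>u\<in>U. exp (- t * w u)) ^ k"
    by (intro mult_left_mono esym_bound U) auto
  finally show ?thesis .
qed

lemma sum_diff_tri: "c \<le> k \<Longrightarrow> 2 * (\<Sum>b<k. c - b) = c * (c + 1 :: nat)"
proof (induction c)
  case 0 thus ?case by simp
next
  case (Suc c)
  have "(\<Sum>b<k. Suc c - b) = (\<Sum>b<k. (c - b) + (if b \<le> c then 1 else 0))"
    by (rule sum.cong) auto
  also have "\<dots> = (\<Sum>b<k. c - b) + card {b. b < k \<and> b \<le> c}"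
    by (simp add: sum.distrib sum.If_cases Int_def)
  also have "{b. b < k \<and> b \<le> c} = {..c}" using Suc by auto
  finally show ?case using Suc by simp
qed

lemma sum_tri_tetra: "3 * (\<Sum>a<k. (k - a) * (k - a + 1)) = k * (k + 1) * (k + 2 :: nat)"
proof (induction k)
  case 0 thus ?case by simp
next
  case (Suc k)
  have "(\<Sum>a<Suc k. (Suc k - a) * (Suc k - a + 1)) = (Suc k) * (Suc k + 1) + (\<Sum>a<k. (k - a) * (k - a + 1))"
    by (subst sum.lessThan_Suc_shift) simp
  thus ?case using Suc by (simp add: algebra_simps)
qed

lemma double_sum_tetra: "6 * (\<Sum>a<k. \<Sum>b<k. k - a - b) = k * (k + 1) * (k + 2 :: nat)"
proof -
  have "2 * (\<Sum>a<k. \<Sum>b<k. k - a - b) = (\<Sum>a<k. 2 * (\<Sum>b<k. (k - a) - b))"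
    by (simp add: sum_distrib_left)
  also have "\<dots> = (\<Sum>a<k. (k - a) * (k - a + 1))"
    by (rule sum.cong[OF refl], rule sum_diff_tri) auto
  finally show ?thesis using sum_tri_tetra[of k] by linarith
qed

lemma card_lt_le:
  assumes "inj_on f A" "\<forall>x\<in>A. f x \<ge> (1::nat)"
  shows "card {x\<in>A. f x < a} \<le> a - 1"
proof -
  have "card {x\<in>A. f x < a} = card (f ` {x\<in>A. f x < a})"
    using assms by (intro card_image[symmetric]) (auto intro: inj_on_subset)
  also have "\<dots> \<le> card {1..<a}" by (rule card_mono) (use assms in auto)
  finally show ?thesis by simp
qed

lemma card_cube_le:
  fixes P :: "(nat \<times> nat) set"
  assumes fin: "finite P" and i1: "inj_on fst P" and i2: "inj_on snd P"
    and pos: "\<forall>x\<in>P. fst x \<ge> 1 \<and> snd x \<ge> 1"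
  shows "card P * (card P + 1) * (card P + 2) \<le> 6 * (\<Sum>x\<in>P. fst x * snd x)"
proof -
  define k where "k = card P"
  let ?I = "\<lambda>x a b. (if a < fst x \<and> b < snd x then 1 else 0) :: nat"
  have 1: "(\<Sum>a<k. \<Sum>b<k. ?I x a b) \<le> fst x * snd x" for x
  proof -
    have "(\<Sum>a<k. \<Sum>b<k. ?I x a b) = (\<Sum>a<k. (if a < fst x then 1 else 0) * (\<Sum>b<k. (if b < snd x then 1 else 0)))"
      by (intro sum.cong refl) (auto simp: sum_distrib_left)
    also have "\<dots> = card {a. a < k \<and> a < fst x} * card {b. b < k \<and> b < snd x}"
      by (simp add: sum_distrib_right[symmetric] sum.If_cases Int_def)
    also have "\<dots> \<le> fst x * snd x"
    proof (intro mult_mono)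
      show "card {a. a < k \<and> a < fst x} \<le> fst x" using card_mono[of "{..<fst x}" "{a. a < k \<and> a < fst x}"] by auto
      show "card {b. b < k \<and> b < snd x} \<le> snd x" using card_mono[of "{..<snd x}" "{b. b < k \<and> b < snd x}"] by auto
    qed auto
    finally show ?thesis .
  qed
  have 2: "k - a - b \<le> (\<Sum>x\<in>P. ?I x a b)" for a b
  proof -
    have e: "(\<Sum>x\<in>P. ?I x a b) = card {x\<in>P. a < fst x \<and> b < snd x}"
      using sum.inter_filter[OF fin, of "\<lambda>_. 1::nat" "\<lambda>x. a < fst x \<and> b < snd x"] by simp
    have "P \<subseteq> {x\<in>P. a < fst x \<and> b < snd x} \<union> {x\<in>P. fst x < Suc a} \<union> {x\<in>P. snd x < Suc b}"
      by auto
    hence "k \<le> card ({x\<in>P. a < fst x \<and> b < snd x} \<union> {x\<in>P. fst x < Suc a} \<union> {x\<in>P. snd x < Suc b})"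
      unfolding k_def by (intro card_mono) (use fin in auto)
    also have "\<dots> \<le> card {x\<in>P. a < fst x \<and> b < snd x} + card {x\<in>P. fst x < Suc a} + card {x\<in>P. snd x < Suc b}"
      by (meson card_Un_le le_trans add_right_mono)
    finally have f: "k \<le> card {x\<in>P. a < fst x \<and> b < snd x} + card {x\<in>P. fst x < Suc a} + card {x\<in>P. snd x < Suc b}" .
    have g1: "card {x\<in>P. fst x < Suc a} \<le> a" using card_lt_le[OF i1, of "Suc a"] pos by auto
    have g2: "card {x\<in>P. snd x < Suc b} \<le> b" using card_lt_le[OF i2, of "Suc b"] pos by auto
    from e f g1 g2
    show ?thesis by linarith
  qed
  have "k * (k + 1) * (k + 2) = 6 * (\<Sum>a<k. \<Sum>b<k. k - a - b)" by (rule double_sum_tetra[symmetric])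
  also have "\<dots> \<le> 6 * (\<Sum>a<k. \<Sum>b<k. \<Sum>x\<in>P. ?I x a b)"
    using 2 by (intro mult_left_mono sum_mono) auto
  also have "(\<Sum>a<k. \<Sum>b<k. \<Sum>x\<in>P. ?I x a b) = (\<Sum>x\<in>P. \<Sum>a<k. \<Sum>b<k. ?I x a b)"
    by (subst sum.swap) (simp add: sum.swap[of _ P])
  also have "\<dots> \<le> (\<Sum>x\<in>P. fst x * snd x)" by (intro sum_mono 1)
  finally show ?thesis unfolding k_def by simp
qed

lemma geom_le: fixes r :: real assumes "0 \<le> r" "r < 1"
  shows "(\<Sum>m\<in>{1..n}. r ^ m) \<le> r / (1 - r)"
proof -
  have "(1 - r) * (\<Sum>m\<in>{1..n}. r ^ m) = r - r ^ Suc n"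
  proof (induction n)
    case (Suc n)
    have "(1 - r) * (\<Sum>m\<in>{1..Suc n}. r ^ m) = (1 - r) * (\<Sum>m\<in>{1..n}. r ^ m) + (1 - r) * r ^ Suc n"
      by (simp add: sum.cl_ivl_Suc distrib_left)
    also have "\<dots> = r - r ^ Suc (Suc n)" using Suc by (simp add: algebra_simps)
    finally show ?case .
  qed simp
  hence "(1 - r) * (\<Sum>m\<in>{1..n}. r ^ m) \<le> r" using assms by simp
  thus ?thesis using assms by (simp add: field_simps)
qed

lemma exp_geom_le: fixes x :: real assumes "x > 0"
  shows "(\<Sum>m\<in>{1..n}. exp (- x) ^ m) \<le> 1 / x"
proof -
  have "(\<Sum>m\<in>{1..n}. exp (- x) ^ m) \<le> exp (- x) / (1 - exp (- x))"
    using assms by (intro geom_le) auto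
  also have "\<dots> = 1 / (exp x - 1)" by (simp add: exp_minus field_simps)
  also have "\<dots> \<le> 1 / x"
  proof -
    have "x \<le> exp x - 1" using exp_ge_add_one_self[of x] by linarith
    thus ?thesis using assms by (intro divide_left_mono) auto
  qed
  finally show ?thesis .
qed

lemma S_bound:
  assumes n: "n \<ge> 1" and t: "t > 0"
  shows "(\<Sum>u\<in>{1..n}\<times>{1..n}. exp (- t * real (fst u * snd u))) \<le> (1 + ln (real n)) / t"
proof -
  have "(\<Sum>u\<in>{1..n}\<times>{1..n}. exp (- t * real (fst u * snd u)))
      = (\<Sum>p\<in>{1..n}. \<Sum>m\<in>{1..n}. exp (- (t * real p)) ^ m)"
  proof -
    have "(\<Sum>p\<in>{1..n}. \<Sum>m\<in>{1..n}. exp (- (t * real p)) ^ m)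
        = (\<Sum>p\<in>{1..n}. \<Sum>m\<in>{1..n}. exp (- t * real (p * m)))"
      by (intro sum.cong refl) (simp add: exp_of_nat_mult[symmetric] algebra_simps)
    also have "\<dots> = (\<Sum>u\<in>{1..n}\<times>{1..n}. exp (- t * real (fst u * snd u)))"
      by (simp add: sum.cartesian_product case_prod_beta)
    finally show ?thesis by simp
  qed
  also have "\<dots> \<le> (\<Sum>p\<in>{1..n}. 1 / (t * real p))"
    using t by (intro sum_mono exp_geom_le) auto
  also have "\<dots> = (1 / t) * (\<Sum>p\<in>{1..n}. 1 / real p)" by (simp add: sum_distrib_left)
  also have "\<dots> \<le> (1 / t) * (1 + ln (real n))"
    using t n by (intro mult_left_mono harm_le_ln) auto
  finally show ?thesis by simp
qed

definition Fam :: "nat \<Rightarrow> nat \<Rightarrow> (nat \<times> nat) set set" where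
  "Fam n k = {Q. Q \<subseteq> {1..n}\<times>{1..n} \<and> card Q = k \<and> (\<Sum>u\<in>Q. real (fst u * snd u)) \<le> real n}"

lemma Fam_bound:
  assumes n: "n \<ge> 1" and k: "k \<ge> 1"
  shows "real (card (Fam n k)) \<le> (exp 2 * real n * (1 + ln (real n)) / real k ^ 2) ^ k"
proof -
  define t where "t = real k / real n"
  have t: "t > 0" using n k by (simp add: t_def)
  have "real (card (Fam n k)) * fact k \<le> exp (t * real n) * (\<Sum>u\<in>{1..n}\<times>{1..n}. exp (- t * real (fst u * snd u))) ^ k"
    unfolding Fam_def by (rule count_bound) (use t in auto)
  also have "\<dots> \<le> exp (t * real n) * ((1 + ln (real n)) / t) ^ k"
    by (intro mult_left_mono power_mono S_bound) (use n t in \<open>auto intro: sum_nonneg\<close>)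
  also have "exp (t * real n) = exp 1 ^ k" using n by (simp add: t_def exp_of_nat_mult[symmetric])
  finally have A: "real (card (Fam n k)) * fact k \<le> exp 1 ^ k * ((1 + ln (real n)) * real n / real k) ^ k"
    by (simp add: t_def)
  have fk: "(real k / exp 1) ^ k \<le> fact k" by (rule fact_ge_pow)
  have pos: "(real k / exp 1) ^ k > 0" using k by simp
  have "real (card (Fam n k)) * (real k / exp 1) ^ k \<le> real (card (Fam n k)) * fact k"
    by (intro mult_left_mono fk) auto
  with A have "real (card (Fam n k)) * (real k / exp 1) ^ k \<le> exp 1 ^ k * ((1 + ln (real n)) * real n / real k) ^ k"
    by linarith
  hence "real (card (Fam n k)) \<le> exp 1 ^ k * ((1 + ln (real n)) * real n / real k) ^ k / (real k / exp 1) ^ k"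
    using pos by (subst pos_le_divide_eq[OF pos])
  also have "\<dots> = (exp 1 * exp 1 * ((1 + ln (real n)) * real n) / real k ^ 2) ^ k"
  proof -
    have "exp 1 ^ k * ((1 + ln (real n)) * real n / real k) ^ k / (real k / exp 1) ^ k
        = (exp 1 * ((1 + ln (real n)) * real n / real k) / (real k / exp 1)) ^ k"
      by (simp only: power_mult_distrib power_divide)
    also have "exp 1 * ((1 + ln (real n)) * real n / real k) / (real k / exp 1)
        = exp 1 * exp 1 * ((1 + ln (real n)) * real n) / real k ^ 2"
      using k by (simp add: power2_eq_square)
    finally show ?thesis .
  qed
  also have "exp 1 * exp 1 = (exp 2 :: real)" by (simp add: mult_exp_exp)
  finally show ?thesis by (simp add: mult_ac)
qed

lemma wilf_sum_eq: "(\<Sum>(p, m)\<in>P. p * m) = (\<Sum>x\<in>P. fst x * snd x)"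
  by (simp add: case_prod_beta)

lemma wilf_in_Fam:
  assumes "wilf_partition n P"
  shows "P \<in> Fam n (card P)" "card P ^ 3 \<le> 6 * n"
proof -
  have fin: "finite P" and pos: "\<forall>x\<in>P. fst x \<ge> 1 \<and> snd x \<ge> 1"
    and i1: "inj_on fst P" and i2: "inj_on snd P" and s: "(\<Sum>x\<in>P. fst x * snd x) = n"
    using assms by (auto simp: wilf_partition_def wilf_sum_eq)
  have "P \<subseteq> {1..n}\<times>{1..n}"
  proof
    fix x assume x: "x \<in> P"
    have "fst x * snd x \<le> n" using member_le_sum[OF x _ fin, of "\<lambda>x. fst x * snd x"] s by simp
    moreover have "fst x \<le> fst x * snd x" "snd x \<le> fst x * snd x" using pos x by auto
    ultimately have "fst x \<le> n" "snd x \<le> n" by linarith+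
    thus "x \<in> {1..n}\<times>{1..n}" using pos x by (auto simp: mem_Times_iff)
  qed
  moreover have "(\<Sum>u\<in>P. real (fst u * snd u)) = real n" by (metis s of_nat_sum)
  ultimately show "P \<in> Fam n (card P)" by (simp add: Fam_def)
  have "card P * (card P + 1) * (card P + 2) \<le> 6 * n" using card_cube_le[OF fin i1 i2 pos] s by simp
  moreover have "card P * card P * card P \<le> card P * (card P + 1) * (card P + 2)"
    by (intro mult_mono) auto
  hence "card P ^ 3 \<le> card P * (card P + 1) * (card P + 2)" by (simp add: power3_eq_cube)
  ultimately show "card P ^ 3 \<le> 6 * n" by linarith
qed

lemma cube_le_powr: fixes k :: nat assumes "k ^ 3 \<le> m" shows "real k \<le> real m powr (1/3)"
proof -
  have "real k = (real k ^ 3) powr (1/3)"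
  proof (cases "k = 0")
    case False
    hence "real k ^ 3 = real k powr (real 3)" by (subst powr_realpow) auto
    hence "(real k ^ 3) powr (1/3) = real k powr (real 3 * (1/3))" by (simp only: powr_powr)
    also have "real 3 * (1/3) = (1::real)" by simp
    finally show ?thesis using False by simp
  qed simp
  also have "\<dots> \<le> real m powr (1/3)" using assms
    by (intro powr_mono2) (auto simp flip: of_nat_power)
  finally show ?thesis .
qed

lemma Fam_finite: "finite (Fam n k)"
  unfolding Fam_def by (rule finite_subset[of _ "Pow ({1..n}\<times>{1..n})"]) auto

lemma ge1_prod: fixes a y :: real assumes "a \<ge> 0" "y \<ge> 1" shows "1 \<le> exp a * y powr a"
proof -
  have "1 \<le> exp a" using assms by simp
  moreover have "1 \<le> y powr a" using assms by (intro ge_one_powr_ge_zero) auto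
  ultimately show ?thesis using mult_mono[of 1 "exp a" 1 "y powr a"] by simp
qed

lemma pow_split_bound:
  fixes a B :: real
  assumes a: "a > 0" and k: "k \<ge> 1" and kA: "real k \<le> a" and Ba: "B / a ^ 2 \<ge> 1"
  shows "(B / real k ^ 2) ^ k \<le> exp a * (B / a ^ 2) powr a"
proof -
  have kp: "real k > 0" using k by simp
  have eq: "B / real k ^ 2 = (B / a ^ 2) * (a / real k) ^ 2" using a kp by (simp add: field_simps)
  have "(B / real k ^ 2) ^ k = ((B / a ^ 2) * (a / real k) ^ 2) ^ k" by (simp only: eq)
  also have "\<dots> = (B / a ^ 2) ^ k * ((a / real k) ^ 2) ^ k" by (rule power_mult_distrib)
  also have "((a / real k) ^ 2) ^ k = ((a / real k) ^ k) ^ 2"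
    unfolding power_mult[symmetric] by (simp only: mult.commute)
  finally have "(B / real k ^ 2) ^ k = (B / a ^ 2) ^ k * ((a / real k) ^ k) ^ 2" .
  also have "\<dots> \<le> (B / a ^ 2) powr a * exp a"
  proof (intro mult_mono)
    have "(B / a ^ 2) ^ k = (B / a ^ 2) powr (real k)" using Ba by (simp add: powr_realpow)
    also have "\<dots> \<le> (B / a ^ 2) powr a" using Ba kA by (intro powr_mono) auto
    finally show "(B / a ^ 2) ^ k \<le> (B / a ^ 2) powr a" .
    have "(a / real k) ^ k \<le> exp (a / exp 1)" using a by (intro pow_div_le_exp) auto
    hence "((a / real k) ^ k) ^ 2 \<le> exp (a / exp 1) ^ 2" using a kp by (intro power_mono) auto
    also have "\<dots> = exp (2 * (a / exp 1))" by (simp add: exp_of_nat_mult[symmetric])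
    also have "\<dots> \<le> exp a"
    proof -
      have "2 \<le> exp (1::real)" using exp_ge_add_one_self[of 1] by simp
      hence "2 * (a / exp 1) \<le> a" using a by (simp add: field_simps)
      thus ?thesis by simp
    qed
    finally show "((a / real k) ^ k) ^ 2 \<le> exp a" .
  qed (use Ba in auto)
  finally show ?thesis by (simp add: mult.commute)
qed

lemma Fam_term_bound:
  fixes a :: real
  assumes n: "n \<ge> 1" and a: "a > 0" and kA: "real k \<le> a"
    and Ba: "exp 2 * real n * (1 + ln (real n)) / a ^ 2 \<ge> 1"
  shows "real (card (Fam n k)) \<le> exp a * (exp 2 * real n * (1 + ln (real n)) / a ^ 2) powr a"
proof (cases "k = 0")
  case True
  have "Fam n k \<subseteq> {{}}"
  proof
    fix Q assume "Q \<in> Fam n k"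
    hence "Q \<subseteq> {1..n}\<times>{1..n}" "card Q = 0" using True by (auto simp: Fam_def)
    moreover from this(1) have "finite Q" by (rule finite_subset) auto
    ultimately show "Q \<in> {{}}" by simp
  qed
  hence "card (Fam n k) \<le> card {{}::(nat\<times>nat) set}" by (intro card_mono) auto
  hence "card (Fam n k) \<le> 1" by simp
  moreover have "1 \<le> exp a * (exp 2 * real n * (1 + ln (real n)) / a ^ 2) powr a"
    using a Ba by (intro ge1_prod) auto
  ultimately show ?thesis by linarith
next
  case False
  hence "real (card (Fam n k)) \<le> (exp 2 * real n * (1 + ln (real n)) / real k ^ 2) ^ k"
    using n by (intro Fam_bound) auto
  also have "\<dots> \<le> exp a * (exp 2 * real n * (1 + ln (real n)) / a ^ 2) powr a"
    using False a kA Ba by (intro pow_split_bound) auto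
  finally show ?thesis .
qed

lemma wilf_count_upper:
  fixes a :: real
  assumes n: "n \<ge> 1" and a: "a = (6 * real n) powr (1/3)"
    and Ba: "exp 2 * real n * (1 + ln (real n)) / a ^ 2 \<ge> 1"
  shows "ln (real (wilf_count n)) \<le> ln (a + 1) + a + a * ln (exp 2 * real n * (1 + ln (real n)) / a ^ 2)"
proof -
  define B where "B = exp 2 * real n * (1 + ln (real n)) / a ^ 2"
  define K where "K = nat \<lfloor>a\<rfloor>"
  have apos: "a > 0" using n a by simp
  have a1: "a \<ge> 1" using n a by (simp add: ge_one_powr_ge_zero)
  have sub: "wilf_partitions n \<subseteq> (\<Union>k\<in>{..K}. Fam n k)"
  proof
    fix P assume "P \<in> wilf_partitions n"
    hence W: "wilf_partition n P" by (simp add: wilf_partitions_def)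
    have "real (card P) \<le> a" using cube_le_powr[OF wilf_in_Fam(2)[OF W]] a by simp
    hence "card P \<le> K" unfolding K_def by (simp add: le_nat_floor)
    thus "P \<in> (\<Union>k\<in>{..K}. Fam n k)" using wilf_in_Fam(1)[OF W] by auto
  qed
  have "real (wilf_count n) \<le> real (card (\<Union>k\<in>{..K}. Fam n k))"
    unfolding wilf_count_def using sub by (intro of_nat_mono card_mono) (auto simp: Fam_finite)
  also have "\<dots> \<le> real (\<Sum>k\<in>{..K}. card (Fam n k))" by (intro of_nat_mono card_UN_le) auto
  also have "\<dots> = (\<Sum>k\<in>{..K}. real (card (Fam n k)))" by simp
  also have "\<dots> \<le> (\<Sum>k\<in>{..K}. exp a * B powr a)"
  proof (rule sum_mono)
    fix k assume "k \<in> {..K}"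
    hence "real k \<le> real K" by simp
    also have "real K \<le> a" unfolding K_def using apos by (simp add: of_nat_nat)
    finally have "real k \<le> a" .
    thus "real (card (Fam n k)) \<le> exp a * B powr a" unfolding B_def using n apos Ba by (intro Fam_term_bound) auto
  qed
  also have "\<dots> = (real K + 1) * (exp a * B powr a)" by simp
  also have "\<dots> \<le> (a + 1) * (exp a * B powr a)"
    using apos by (intro mult_right_mono) (auto simp: K_def)
  finally have up: "real (wilf_count n) \<le> (a + 1) * (exp a * B powr a)" .
  have B1: "B \<ge> 1" using Ba by (simp add: B_def)
  have rhs: "ln ((a + 1) * (exp a * B powr a)) = ln (a + 1) + a + a * ln B"
    using apos B1 by (simp add: ln_mult ln_powr)
  show ?thesis
  proof (cases "wilf_count n = 0")
    case True
    have "0 \<le> ln (a + 1) + a + a * ln B" using apos B1 by auto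
    thus ?thesis using True by (simp add: B_def)
  next
    case False
    hence "ln (real (wilf_count n)) \<le> ln ((a + 1) * (exp a * B powr a))"
      using up by (intro ln_mono) auto
    thus ?thesis using rhs by (simp add: B_def)
  qed
qed

definition sw :: "nat \<times> nat \<Rightarrow> nat \<times> nat" where "sw x = (snd x, fst x)"
definition Dg :: "(nat \<times> nat) set \<Rightarrow> (nat \<times> nat) set" where "Dg P = {x\<in>P. fst x = snd x}"
definition Cp :: "(nat \<times> nat) set \<Rightarrow> (nat \<times> nat) set" where "Cp P = {x\<in>P. fst x < snd x}"

lemma iota_sw: "iota P = sw ` P" by (simp add: iota_def sw_def case_prod_beta')

lemma sw_sw [simp]: "sw (sw x) = x" by (simp add: sw_def)
lemma inj_sw: "inj_on sw A" by (metis inj_onI sw_sw)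

lemma fixed_decomp:
  assumes fx: "iota P = P"
  shows "P = Dg P \<union> Cp P \<union> sw ` Cp P"
proof (intro equalityI subsetI)
  fix x assume x: "x \<in> P"
  show "x \<in> Dg P \<union> Cp P \<union> sw ` Cp P"
  proof (cases "fst x < snd x \<or> fst x = snd x")
    case True thus ?thesis using x by (auto simp: Dg_def Cp_def)
  next
    case False
    have "sw x \<in> P" using x fx iota_sw by (metis imageI)
    moreover have "fst (sw x) < snd (sw x)" using False by (simp add: sw_def)
    ultimately have "sw x \<in> Cp P" by (simp add: Cp_def)
    hence "sw (sw x) \<in> sw ` Cp P" by blast
    thus ?thesis by simp
  qed
next
  fix x assume "x \<in> Dg P \<union> Cp P \<union> sw ` Cp P"
  moreover have "sw y \<in> P" if "y \<in> P" for y using that fx iota_sw by (metis imageI)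
  ultimately show "x \<in> P" by (auto simp: Dg_def Cp_def)
qed

lemma fixed_disj:
  "Dg P \<inter> Cp P = {}" "(Dg P \<union> Cp P) \<inter> sw ` Cp Q = {}"
  by (auto simp: Dg_def Cp_def sw_def)

lemma fixed_facts:
  assumes W: "wilf_partition n P" and fx: "iota P = P"
  shows "card P = card (Dg P) + 2 * card (Cp P)"
    and "Cp P \<in> Fam n (card (Cp P))"
    and "Dg P \<subseteq> (\<lambda>p. (p, p)) ` {p. 1 \<le> p \<and> p * p \<le> n}"
proof -
  have fin: "finite P" and pos: "\<forall>x\<in>P. fst x \<ge> 1 \<and> snd x \<ge> 1"
    and s: "(\<Sum>x\<in>P. fst x * snd x) = n"
    using W by (auto simp: wilf_partition_def wilf_sum_eq)
  have fD: "finite (Dg P)" "finite (Cp P)" using fin by (auto simp: Dg_def Cp_def)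
  have dec: "P = Dg P \<union> Cp P \<union> sw ` Cp P" by (rule fixed_decomp[OF fx])
  show "card P = card (Dg P) + 2 * card (Cp P)"
  proof -
    have "card P = card (Dg P \<union> Cp P) + card (sw ` Cp P)"
      by (subst dec, rule card_Un_disjoint) (use fD fixed_disj in auto)
    also have "card (Dg P \<union> Cp P) = card (Dg P) + card (Cp P)"
      by (rule card_Un_disjoint) (use fD fixed_disj in auto)
    also have "card (sw ` Cp P) = card (Cp P)" by (rule card_image[OF inj_sw])
    finally show ?thesis by simp
  qed
  have sumP: "(\<Sum>x\<in>P. fst x * snd x) = (\<Sum>x\<in>Dg P. fst x * snd x) + 2 * (\<Sum>x\<in>Cp P. fst x * snd x)"
  proof -
    have "(\<Sum>x\<in>P. fst x * snd x) = (\<Sum>x\<in>Dg P \<union> Cp P. fst x * snd x) + (\<Sum>x\<in>sw ` Cp P. fst x * snd x)"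
      by (subst dec, rule sum.union_disjoint) (use fD fixed_disj in auto)
    also have "(\<Sum>x\<in>Dg P \<union> Cp P. fst x * snd x) = (\<Sum>x\<in>Dg P. fst x * snd x) + (\<Sum>x\<in>Cp P. fst x * snd x)"
      by (rule sum.union_disjoint) (use fD fixed_disj in auto)
    also have "(\<Sum>x\<in>sw ` Cp P. fst x * snd x) = (\<Sum>x\<in>Cp P. fst x * snd x)"
      by (subst sum.reindex[OF inj_sw]) (simp add: sw_def mult.commute)
    finally show ?thesis by simp
  qed
  have CU: "Cp P \<subseteq> {1..n}\<times>{1..n}"
    using wilf_in_Fam(1)[OF W] by (auto simp: Fam_def Cp_def)
  have "(\<Sum>x\<in>Cp P. fst x * snd x) \<le> n" using s sumP by linarith
  hence "(\<Sum>u\<in>Cp P. real (fst u * snd u)) \<le> real n" by (metis of_nat_sum of_nat_le_iff)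
  thus "Cp P \<in> Fam n (card (Cp P))" using CU by (simp add: Fam_def)
  show "Dg P \<subseteq> (\<lambda>p. (p, p)) ` {p. 1 \<le> p \<and> p * p \<le> n}"
  proof
    fix x assume x: "x \<in> Dg P"
    have "fst x * snd x \<le> (\<Sum>x\<in>Dg P. fst x * snd x)" by (rule member_le_sum[OF x _ fD(1)]) auto
    also have "\<dots> \<le> n" using s sumP by linarith
    finally have "fst x * snd x \<le> n" .
    moreover have "fst x = snd x" "x \<in> P" using x by (auto simp: Dg_def)
    ultimately show "x \<in> (\<lambda>p. (p, p)) ` {p. 1 \<le> p \<and> p * p \<le> n}" using pos
      by (intro image_eqI[of _ _ "fst x"]) (auto simp: prod_eq_iff)
  qed
qed

definition Diag :: "nat \<Rightarrow> (nat \<times> nat) set" where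
  "Diag n = (\<lambda>p. (p, p)) ` {p. 1 \<le> p \<and> p * p \<le> n}"

lemma Diag_finite: "finite (Diag n)"
proof -
  have "{p. 1 \<le> p \<and> p * p \<le> n} \<subseteq> {..n}" by auto (metis le_trans le_square)
  thus ?thesis unfolding Diag_def by (intro finite_imageI) (rule finite_subset, auto)
qed

lemma card_Diag: "real (card (Diag n)) \<le> sqrt (real n)"
proof -
  have sub: "{p. 1 \<le> p \<and> p * p \<le> n} \<subseteq> {1..nat \<lfloor>sqrt (real n)\<rfloor>}"
  proof
    fix p assume p: "p \<in> {p. 1 \<le> p \<and> p * p \<le> n}"
    hence "real p * real p \<le> real n" by (metis mem_Collect_eq of_nat_le_iff of_nat_mult)
    hence "real p \<le> sqrt (real n)" by (intro real_le_rsqrt) (simp add: power2_eq_square)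
    thus "p \<in> {1..nat \<lfloor>sqrt (real n)\<rfloor>}" using p by (auto simp: le_nat_floor)
  qed
  have "card (Diag n) \<le> card {p. 1 \<le> p \<and> p * p \<le> n}" unfolding Diag_def by (rule card_image_le) (use sub in \<open>auto intro: finite_subset\<close>)
  also have "\<dots> \<le> card {1..nat \<lfloor>sqrt (real n)\<rfloor>}" by (rule card_mono[OF _ sub]) simp
  finally have "card (Diag n) \<le> nat \<lfloor>sqrt (real n)\<rfloor>" by simp
  hence "real (card (Diag n)) \<le> real (nat \<lfloor>sqrt (real n)\<rfloor>)" by (rule of_nat_mono)
  also have "\<dots> \<le> sqrt (real n)" by (simp add: of_nat_nat)
  finally show ?thesis .
qed

definition DF :: "nat \<Rightarrow> nat \<Rightarrow> (nat \<times> nat) set set" where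
  "DF n d = {Q. Q \<subseteq> Diag n \<and> card Q = d}"

lemma DF_finite: "finite (DF n d)" unfolding DF_def using Diag_finite by simp

lemma DF_bound1:
  assumes d: "d \<ge> 1"
  shows "real (card (DF n d)) \<le> (exp 1 * sqrt (real n) / real d) ^ d"
proof -
  have e: "esym (\<lambda>_. 1) (Diag n) d = real (card (DF n d))" by (simp add: esym_def DF_def)
  have "real (card (DF n d)) * fact d \<le> (\<Sum>u\<in>Diag n. (1::real)) ^ d"
    using esym_bound[OF Diag_finite[of n], where x="\<lambda>_. 1" and k=d] e by simp
  also have "\<dots> \<le> sqrt (real n) ^ d" using card_Diag by (intro power_mono) auto
  finally have A: "real (card (DF n d)) * fact d \<le> sqrt (real n) ^ d" .
  have pos: "(real d / exp 1) ^ d > 0" using d by simp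
  have "real (card (DF n d)) * (real d / exp 1) ^ d \<le> real (card (DF n d)) * fact d"
    by (intro mult_left_mono fact_ge_pow) auto
  with A have "real (card (DF n d)) * (real d / exp 1) ^ d \<le> sqrt (real n) ^ d" by linarith
  hence "real (card (DF n d)) \<le> sqrt (real n) ^ d / (real d / exp 1) ^ d"
    by (subst pos_le_divide_eq[OF pos])
  also have "\<dots> = (exp 1 * sqrt (real n) / real d) ^ d"
    by (simp add: power_divide power_mult_distrib)
  finally show ?thesis .
qed

lemma pow_div_split:
  fixes Y a :: real assumes a: "a > 0" and Y: "Y \<ge> 0"
  shows "(Y / real d) ^ d \<le> (Y / a) ^ d * exp (a / exp 1)"
proof (cases "d = 0")
  case False
  have eq: "Y / real d = (Y / a) * (a / real d)" using a False by simp
  have "(Y / real d) ^ d = ((Y / a) * (a / real d)) ^ d" by (simp only: eq)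
  also have "\<dots> = (Y / a) ^ d * (a / real d) ^ d" by (rule power_mult_distrib)
  also have "\<dots> \<le> (Y / a) ^ d * exp (a / exp 1)"
    using a Y by (intro mult_left_mono pow_div_le_exp) auto
  finally show ?thesis .
qed (use a in simp)

lemma DF_bound:
  assumes a: "a > 0"
  shows "real (card (DF n d)) \<le> (exp 1 * sqrt (real n) / a) ^ d * exp (a / exp 1)"
proof (cases "d = 0")
  case True
  have "DF n d \<subseteq> {{}}"
  proof
    fix Q assume "Q \<in> DF n d"
    hence "Q \<subseteq> Diag n" "card Q = 0" using True by (auto simp: DF_def)
    moreover from this(1) have "finite Q" using Diag_finite by (rule finite_subset)
    ultimately show "Q \<in> {{}}" by simp
  qed
  hence "card (DF n d) \<le> card {{}::(nat\<times>nat) set}" by (intro card_mono) auto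
  hence "real (card (DF n d)) \<le> 1" by simp
  also have "1 \<le> exp (a / exp 1)" using a by simp
  finally show ?thesis using True by simp
next
  case False
  hence "real (card (DF n d)) \<le> (exp 1 * sqrt (real n) / real d) ^ d" by (intro DF_bound1) auto
  also have "\<dots> \<le> (exp 1 * sqrt (real n) / a) ^ d * exp (a / exp 1)"
    using a by (intro pow_div_split) auto
  finally show ?thesis .
qed

lemma Fam_bound2:
  assumes n: "n \<ge> 1" and a: "a > 0"
  shows "real (card (Fam n c)) \<le> (4 * (exp 2 * real n * (1 + ln (real n))) / a ^ 2) ^ c * exp (a / exp 1)"
proof (cases "c = 0")
  case True
  have "Fam n c \<subseteq> {{}}"
  proof
    fix Q assume "Q \<in> Fam n c"
    hence "Q \<subseteq> {1..n}\<times>{1..n}" "card Q = 0" using True by (auto simp: Fam_def)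
    moreover from this(1) have "finite Q" by (rule finite_subset) auto
    ultimately show "Q \<in> {{}}" by simp
  qed
  hence "card (Fam n c) \<le> card {{}::(nat\<times>nat) set}" by (intro card_mono) auto
  hence "real (card (Fam n c)) \<le> 1" by simp
  also have "1 \<le> exp (a / exp 1)" using a by simp
  finally show ?thesis using True by simp
next
  case False
  define B where "B = exp 2 * real n * (1 + ln (real n))"
  have B0: "B \<ge> 0" using n by (simp add: B_def)
  define b where "b = a / 2"
  have b: "b > 0" using a by (simp add: b_def)
  have kp: "real c > 0" using False by simp
  have "real (card (Fam n c)) \<le> (B / real c ^ 2) ^ c" unfolding B_def
    using n False by (intro Fam_bound) auto
  also have eq: "B / real c ^ 2 = (B / b ^ 2) * (b / real c) ^ 2" using b kp by (simp add: field_simps)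
  have "(B / real c ^ 2) ^ c = ((B / b ^ 2) * (b / real c) ^ 2) ^ c" by (simp only: eq)
  also have "\<dots> = (B / b ^ 2) ^ c * ((b / real c) ^ 2) ^ c" by (rule power_mult_distrib)
  also have "((b / real c) ^ 2) ^ c = ((b / real c) ^ c) ^ 2"
    unfolding power_mult[symmetric] by (simp only: mult.commute)
  also have "((b / real c) ^ c) ^ 2 \<le> exp (b / exp 1) ^ 2"
    using b by (intro power_mono pow_div_le_exp) auto
  also have "exp (b / exp 1) ^ 2 = exp (a / exp 1)"
    by (simp add: b_def exp_of_nat_mult[symmetric])
  also have "B / b ^ 2 = 4 * B / a ^ 2" by (simp add: b_def power2_eq_square)
  finally show ?thesis using B0 by (simp add: B_def mult_left_mono)
qed

lemma beta_gamma_bound: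
  fixes \<beta> \<gamma> a :: real
  assumes b0: "\<beta> \<ge> 0" and bg: "\<beta> \<le> sqrt \<gamma>" and g1: "\<gamma> \<ge> 1" and da: "real (d + 2 * c) \<le> a"
  shows "\<beta> ^ d * \<gamma> ^ c \<le> \<gamma> powr (a / 2)"
proof -
  have s1: "sqrt \<gamma> \<ge> 1" using g1 by simp
  have "\<beta> ^ d * \<gamma> ^ c \<le> sqrt \<gamma> ^ d * \<gamma> ^ c"
    using b0 bg g1 by (intro mult_right_mono power_mono) auto
  also have "sqrt \<gamma> ^ d * \<gamma> ^ c = sqrt \<gamma> ^ (d + 2 * c)"
  proof -
    have "\<gamma> ^ c = sqrt \<gamma> ^ (2 * c)" using g1 by (simp add: power_mult)
    thus ?thesis by (simp add: power_add)
  qed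
  also have "\<dots> = sqrt \<gamma> powr (real (d + 2 * c))" by (rule powr_realpow[symmetric]) (use s1 in simp)
  also have "\<dots> \<le> sqrt \<gamma> powr a" using s1 da by (intro powr_mono) auto
  also have "\<dots> = \<gamma> powr (a / 2)" using g1 by (simp add: powr_half_sqrt[symmetric] powr_powr)
  finally show ?thesis .
qed

lemma fixed_count_upper:
  fixes a \<gamma> :: real
  assumes n: "n \<ge> 1" and a: "a = (6 * real n) powr (1/3)"
    and g: "\<gamma> = 4 * (exp 2 * real n * (1 + ln (real n))) / a ^ 2" and g1: "\<gamma> \<ge> 1"
  shows "ln (real (wilf_fixed_count n)) \<le> 2 * ln (a + 1) + a + (a / 2) * ln \<gamma>"
proof -
  define K where "K = nat \<lfloor>a\<rfloor>"
  define I where "I = {i \<in> {..K}\<times>{..K}. fst i + 2 * snd i \<le> K}"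
  define FX where "FX = {P \<in> wilf_partitions n. iota P = P}"
  define \<phi> where "\<phi> P = (Dg P, Cp P)" for P
  define \<beta> where "\<beta> = exp 1 * sqrt (real n) / a"
  define M where "M = \<gamma> powr (a / 2) * exp a"
  have apos: "a > 0" using n a by simp
  have KA: "real K \<le> a" unfolding K_def using apos by (simp add: of_nat_nat)
  have b0: "\<beta> \<ge> 0" using apos by (simp add: \<beta>_def)
  have bg: "\<beta> \<le> sqrt \<gamma>"
  proof (rule real_le_rsqrt)
    have "\<beta> ^ 2 = exp 1 ^ 2 * real n / a ^ 2" using n by (simp add: \<beta>_def power_divide power_mult_distrib)
    also have "exp 1 ^ 2 = (exp 2 :: real)" by (simp add: exp_of_nat_mult[symmetric])
    also have "exp 2 * real n / a ^ 2 \<le> \<gamma>" unfolding g using n apos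
      by (intro divide_right_mono) (auto simp: mult_le_cancel_left1 mult.assoc intro!: mult_left_mono)
    finally show "\<beta> ^ 2 \<le> \<gamma>" .
  qed
  have inj: "inj_on \<phi> FX"
  proof (rule inj_onI)
    fix P Q assume P: "P \<in> FX" and Q: "Q \<in> FX" and e: "\<phi> P = \<phi> Q"
    have "P = Dg P \<union> Cp P \<union> sw ` Cp P" using P by (intro fixed_decomp) (simp add: FX_def)
    also have "\<dots> = Dg Q \<union> Cp Q \<union> sw ` Cp Q" using e by (simp add: \<phi>_def)
    also have "\<dots> = Q" using Q by (intro fixed_decomp[symmetric]) (simp add: FX_def)
    finally show "P = Q" .
  qed
  have sub: "\<phi> ` FX \<subseteq> (\<Union>i\<in>I. DF n (fst i) \<times> Fam n (snd i))"
  proof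
    fix y assume "y \<in> \<phi> ` FX"
    then obtain P where P: "P \<in> FX" and y: "y = \<phi> P" by auto
    have W: "wilf_partition n P" and fx: "iota P = P" using P by (auto simp: FX_def wilf_partitions_def)
    have cP: "card P = card (Dg P) + 2 * card (Cp P)" by (rule fixed_facts(1)[OF W fx])
    have "real (card P) \<le> a" using cube_le_powr[OF wilf_in_Fam(2)[OF W]] a by simp
    hence "card P \<le> K" unfolding K_def by (simp add: le_nat_floor)
    hence i: "(card (Dg P), card (Cp P)) \<in> I" using cP by (auto simp: I_def)
    have "Dg P \<in> DF n (card (Dg P))" using fixed_facts(3)[OF W fx] by (simp add: DF_def Diag_def)
    moreover have "Cp P \<in> Fam n (card (Cp P))" by (rule fixed_facts(2)[OF W fx])
    ultimately show "y \<in> (\<Union>i\<in>I. DF n (fst i) \<times> Fam n (snd i))" using i y by (force simp: \<phi>_def)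
  qed
  have finI: "finite I" by (simp add: I_def)
  have "real (wilf_fixed_count n) = real (card (\<phi> ` FX))"
    unfolding wilf_fixed_count_def FX_def[symmetric] using card_image[OF inj] by simp
  also have "\<dots> \<le> real (card (\<Union>i\<in>I. DF n (fst i) \<times> Fam n (snd i)))"
    using sub finI by (intro of_nat_mono card_mono) (auto simp: DF_finite Fam_finite)
  also have "\<dots> \<le> real (\<Sum>i\<in>I. card (DF n (fst i) \<times> Fam n (snd i)))"
    by (intro of_nat_mono card_UN_le finI)
  also have "\<dots> = (\<Sum>i\<in>I. real (card (DF n (fst i))) * real (card (Fam n (snd i))))"
    by (simp add: card_cartesian_product)
  also have "\<dots> \<le> (\<Sum>i\<in>I. M)"
  proof (rule sum_mono)
    fix i assume i: "i \<in> I"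
    have da: "real (fst i + 2 * snd i) \<le> a" using i KA by (auto simp: I_def)
    have "real (card (DF n (fst i))) * real (card (Fam n (snd i)))
        \<le> (\<beta> ^ fst i * exp (a / exp 1)) * (\<gamma> ^ snd i * exp (a / exp 1))"
      using DF_bound[OF apos, of n "fst i"] Fam_bound2[OF n apos, of "snd i"]
      by (intro mult_mono) (auto simp: \<beta>_def g)
    also have "\<dots> = (\<beta> ^ fst i * \<gamma> ^ snd i) * exp (2 * (a / exp 1))"
      by (simp add: exp_add[symmetric] mult_ac)
    also have "\<dots> \<le> \<gamma> powr (a / 2) * exp a"
    proof (intro mult_mono)
      show "\<beta> ^ fst i * \<gamma> ^ snd i \<le> \<gamma> powr (a / 2)" by (rule beta_gamma_bound[OF b0 bg g1 da])
      have "2 \<le> exp (1::real)" using exp_ge_add_one_self[of 1] by simp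
      hence "2 * (a / exp 1) \<le> a" using apos by (simp add: field_simps)
      thus "exp (2 * (a / exp 1)) \<le> exp a" by simp
    qed auto
    finally show "real (card (DF n (fst i))) * real (card (Fam n (snd i))) \<le> M" by (simp add: M_def)
  qed
  also have "\<dots> = real (card I) * M" by simp
  also have "\<dots> \<le> (a + 1) ^ 2 * M"
  proof (rule mult_right_mono)
    have "card I \<le> card ({..K}\<times>{..K})" by (rule card_mono) (auto simp: I_def)
    hence "card I \<le> (K + 1) * (K + 1)" by simp
    hence "real (card I) \<le> real ((K + 1) * (K + 1))" by (rule of_nat_mono)
    hence "real (card I) \<le> (real K + 1) ^ 2" by (simp add: power2_eq_square algebra_simps)
    also have "\<dots> \<le> (a + 1) ^ 2" using KA by (intro power_mono) auto
    finally show "real (card I) \<le> (a + 1) ^ 2" .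
  qed (simp add: M_def)
  finally have up: "real (wilf_fixed_count n) \<le> (a + 1) ^ 2 * M" .
  have rhs: "ln ((a + 1) ^ 2 * M) = 2 * ln (a + 1) + a + (a / 2) * ln \<gamma>"
    using apos g1 by (simp add: M_def ln_mult ln_powr ln_realpow)
  show ?thesis
  proof (cases "wilf_fixed_count n = 0")
    case True
    have "0 \<le> 2 * ln (a + 1) + a + (a / 2) * ln \<gamma>" using apos g1 by auto
    thus ?thesis using True by simp
  next
    case False
    hence "ln (real (wilf_fixed_count n)) \<le> ln ((a + 1) ^ 2 * M)"
      using up by (intro ln_mono) auto
    thus ?thesis using rhs by simp
  qed
qed

definition Gr :: "nat \<Rightarrow> nat \<Rightarrow> nat \<Rightarrow> nat \<Rightarrow> (nat \<Rightarrow> nat \<Rightarrow> nat) \<Rightarrow> (nat \<times> nat) set" where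
  "Gr b q c1 c2 p = (\<lambda>(t, i). (c1 + t * b + i, c2 + (q - 1 - t) * b + p t i)) ` ({..<q} \<times> {..<b})"

definition Perms :: "nat \<Rightarrow> nat \<Rightarrow> (nat \<Rightarrow> nat \<Rightarrow> nat) set" where
  "Perms b q = (\<Pi>\<^sub>E t\<in>{..<q}. {\<pi>. \<pi> permutes {..<b}})"

lemma card_Perms: "card (Perms b q) = fact b ^ q"
  unfolding Perms_def by (simp add: card_PiE card_permutations)

lemma divmod_eq: fixes b t t' i i' :: nat
  assumes "i < b" "i' < b" "t * b + i = t' * b + i'" shows "t = t'" "i = i'"
proof -
  have a: "(t * b + i) div b = t" "(t * b + i) mod b = i" using assms(1) by auto
  have b: "(t' * b + i') div b = t'" "(t' * b + i') mod b = i'" using assms(2) by auto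
  show "t = t'" using a(1) b(1) assms(3) by simp
  show "i = i'" using a(2) b(2) assms(3) by simp
qed

lemma perm_lt: "p \<in> Perms b q \<Longrightarrow> t < q \<Longrightarrow> i < b \<Longrightarrow> p t i < b"
  unfolding Perms_def by (auto dest!: permutes_in_image[of _ "{..<b}"])

lemma perm_inj: "p \<in> Perms b q \<Longrightarrow> t < q \<Longrightarrow> p t i = p t i' \<Longrightarrow> i = i'"
proof -
  assume "p \<in> Perms b q" "t < q" "p t i = p t i'"
  hence "p t permutes {..<b}" "p t i = p t i'" unfolding Perms_def by auto
  thus "i = i'" using permutes_inj injD by metis
qed

lemma Gr_mem: "x \<in> Gr b q c1 c2 p \<longleftrightarrow> (\<exists>t<q. \<exists>i<b. x = (c1 + t * b + i, c2 + (q - 1 - t) * b + p t i))"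
  unfolding Gr_def by auto

lemma Gr_range:
  assumes p: "p \<in> Perms b q" and x: "x \<in> Gr b q c1 c2 p"
  shows "c1 \<le> fst x" "fst x < c1 + q * b" "c2 \<le> snd x" "snd x < c2 + q * b"
proof -
  obtain t i where t: "t < q" and i: "i < b" and xe: "x = (c1 + t * b + i, c2 + (q - 1 - t) * b + p t i)"
    using x by (auto simp: Gr_mem)
  have "t * b + i < Suc t * b" using i by simp
  also have "Suc t * b \<le> q * b" using t by (intro mult_right_mono) auto
  finally show "c1 \<le> fst x" "fst x < c1 + q * b" using xe by auto
  have "(q - 1 - t) * b + p t i < Suc (q - 1 - t) * b" using perm_lt[OF p t i] by simp
  also have "Suc (q - 1 - t) * b \<le> q * b" using t by (intro mult_right_mono) auto
  finally show "c2 \<le> snd x" "snd x < c2 + q * b" using xe by auto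
qed

lemma Gr_inj_fst: "inj_on fst (Gr b q c1 c2 p)"
proof (rule inj_onI)
  fix x y assume x: "x \<in> Gr b q c1 c2 p" and y: "y \<in> Gr b q c1 c2 p" and e: "fst x = fst y"
  obtain t i where t: "t < q" "i < b" "x = (c1 + t * b + i, c2 + (q - 1 - t) * b + p t i)"
    using x by (auto simp: Gr_mem)
  obtain t' i' where t': "t' < q" "i' < b" "y = (c1 + t' * b + i', c2 + (q - 1 - t') * b + p t' i')"
    using y by (auto simp: Gr_mem)
  have "t * b + i = t' * b + i'" using e t t' by simp
  hence "t = t'" "i = i'" using divmod_eq t t' by blast+
  thus "x = y" using t t' by simp
qed

lemma Gr_inj_snd: assumes p: "p \<in> Perms b q" shows "inj_on snd (Gr b q c1 c2 p)"
proof (rule inj_onI)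
  fix x y assume x: "x \<in> Gr b q c1 c2 p" and y: "y \<in> Gr b q c1 c2 p" and e: "snd x = snd y"
  obtain t i where t: "t < q" "i < b" "x = (c1 + t * b + i, c2 + (q - 1 - t) * b + p t i)"
    using x by (auto simp: Gr_mem)
  obtain t' i' where t': "t' < q" "i' < b" "y = (c1 + t' * b + i', c2 + (q - 1 - t') * b + p t' i')"
    using y by (auto simp: Gr_mem)
  have eq: "(q - 1 - t) * b + p t i = (q - 1 - t') * b + p t' i'" using e t t' by simp
  have l1: "p t i < b" "p t' i' < b" using perm_lt[OF p] t t' by auto
  have "q - 1 - t = q - 1 - t'" "p t i = p t' i'" using divmod_eq[OF l1 eq] by auto
  hence tt: "t = t'" using t t' by simp
  hence "i = i'" using perm_inj[OF p] t \<open>p t i = p t' i'\<close> by blast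
  thus "x = y" using t t' tt by simp
qed

lemma Gr_inj_perm: "inj_on (Gr b q c1 c2) (Perms b q)"
proof (rule inj_onI)
  fix p p' assume p: "p \<in> Perms b q" and p': "p' \<in> Perms b q" and e: "Gr b q c1 c2 p = Gr b q c1 c2 p'"
  show "p = p'"
  proof (rule ext, rule ext)
    fix t i
    show "p t i = p' t i"
    proof (cases "t < q")
      case False thus ?thesis using p p' by (auto simp: Perms_def PiE_def extensional_def)
    next
      case t: True
      show ?thesis
      proof (cases "i < b")
        case False
        have "p t \<in> {\<pi>. \<pi> permutes {..<b}}" "p' t \<in> {\<pi>. \<pi> permutes {..<b}}"
          using p p' t by (auto simp: Perms_def)
        thus ?thesis using False by (auto dest!: permutes_not_in)
      next
        case i: True
        have "(c1 + t * b + i, c2 + (q - 1 - t) * b + p t i) \<in> Gr b q c1 c2 p"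
          unfolding Gr_mem using t i by blast
        hence "(c1 + t * b + i, c2 + (q - 1 - t) * b + p t i) \<in> Gr b q c1 c2 p'"
          using e by simp
        then obtain t' i' where t': "t' < q" "i' < b"
          "(c1 + t * b + i, c2 + (q - 1 - t) * b + p t i) = (c1 + t' * b + i', c2 + (q - 1 - t') * b + p' t' i')"
          by (auto simp: Gr_mem)
        hence "t * b + i = t' * b + i'" by simp
        hence "t = t'" "i = i'" using divmod_eq i t' by blast+
        thus ?thesis using t' by simp
      qed
    qed
  qed
qed

lemma Gr_sum:
  assumes p: "p \<in> Perms b q"
  shows "(\<Sum>x\<in>Gr b q c1 c2 p. fst x * snd x) \<le> b * (\<Sum>t<q. (c1 + Suc t * b) * (c2 + (q - t) * b))"
proof -
  let ?h = "\<lambda>(t, i). (c1 + t * b + i, c2 + (q - 1 - t) * b + p t i)"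
  have "(\<Sum>x\<in>Gr b q c1 c2 p. fst x * snd x) \<le> sum ((\<lambda>x. fst x * snd x) \<circ> ?h) ({..<q} \<times> {..<b})"
    unfolding Gr_def by (rule sum_image_le) auto
  also have "\<dots> = (\<Sum>y\<in>{..<q} \<times> {..<b}. fst (?h y) * snd (?h y))" by (simp add: comp_def)
  also have "\<dots> \<le> (\<Sum>y\<in>{..<q} \<times> {..<b}. (c1 + Suc (fst y) * b) * (c2 + (q - fst y) * b))"
  proof (rule sum_mono)
    fix y assume y: "y \<in> {..<q} \<times> {..<b}"
    obtain t i where yt: "y = (t, i)" and t: "t < q" and i: "i < b" using y by auto
    have "c1 + t * b + i \<le> c1 + Suc t * b" using i by simp
    moreover have "c2 + (q - 1 - t) * b + p t i \<le> c2 + (q - t) * b"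
    proof -
      have "(q - 1 - t) * b + p t i \<le> (q - 1 - t) * b + b" using perm_lt[OF p t i] by simp
      also have "\<dots> = Suc (q - 1 - t) * b" by simp
      also have "Suc (q - 1 - t) = q - t" using t by simp
      finally show ?thesis by simp
    qed
    ultimately show "fst (?h y) * snd (?h y) \<le> (c1 + Suc (fst y) * b) * (c2 + (q - fst y) * b)"
      using yt by (auto intro: mult_mono)
  qed
  also have "\<dots> = (\<Sum>t<q. \<Sum>i<b. (c1 + Suc t * b) * (c2 + (q - t) * b))"
    by (subst sum.cartesian_product') simp
  also have "\<dots> = b * (\<Sum>t<q. (c1 + Suc t * b) * (c2 + (q - t) * b))"
    by (simp add: sum_distrib_left)
  finally show ?thesis .
qed

lemma sum_t2: "2 * (\<Sum>t<q. t + 2) = q * (q + 3 :: nat)"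
  by (induction q) (auto simp: algebra_simps)

lemma sumA: "6 * (\<Sum>t<q. (t + 2) * (q + 1 - t)) = q ^ 3 + 9 * q ^ 2 + 14 * (q :: nat)"
proof (induction q)
  case 0 thus ?case by simp
next
  case (Suc q)
  have "(\<Sum>t<Suc q. (t + 2) * (Suc q + 1 - t)) = (\<Sum>t<q. (t + 2) * (Suc q + 1 - t)) + 2 * (q + 2)"
    by simp
  also have "(\<Sum>t<q. (t + 2) * (Suc q + 1 - t)) = (\<Sum>t<q. (t + 2) * (q + 1 - t) + (t + 2))"
    by (intro sum.cong refl) (auto simp: algebra_simps Suc_diff_le)
  also have "\<dots> = (\<Sum>t<q. (t + 2) * (q + 1 - t)) + (\<Sum>t<q. t + 2)" by (rule sum.distrib)
  finally have "6 * (\<Sum>t<Suc q. (t + 2) * (Suc q + 1 - t)) = 6 * (\<Sum>t<q. (t + 2) * (q + 1 - t)) + 3 * (2 * (\<Sum>t<q. t + 2)) + 12 * (q + 2)"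
    by simp
  also have "\<dots> = q ^ 3 + 9 * q ^ 2 + 14 * q + 3 * (q * (q + 3)) + 12 * (q + 2)"
    using Suc sum_t2[of q] by simp
  also have "\<dots> = Suc q ^ 3 + 9 * Suc q ^ 2 + 14 * Suc q" by (simp add: power2_eq_square power3_eq_cube algebra_simps)
  finally show ?case .
qed

lemma sumB: "6 * (\<Sum>t<q. (t + 2) * (2 * q + 1 - t)) = 4 * q ^ 3 + 18 * q ^ 2 + 14 * (q :: nat)"
proof -
  have "(\<Sum>t<q. (t + 2) * (2 * q + 1 - t)) = (\<Sum>t<q. (t + 2) * (q + 1 - t) + q * (t + 2))"
  proof (intro sum.cong refl)
    fix t assume "t \<in> {..<q}"
    hence h: "2 * q + 1 - t = (q + 1 - t) + q" by auto
    have "(t + 2) * (2 * q + 1 - t) = (t + 2) * ((q + 1 - t) + q)" by (simp only: h)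
    also have "\<dots> = (t + 2) * (q + 1 - t) + q * (t + 2)" by (simp only: distrib_left mult.commute)
    finally show "(t + 2) * (2 * q + 1 - t) = (t + 2) * (q + 1 - t) + q * (t + 2)" .
  qed
  also have "\<dots> = (\<Sum>t<q. (t + 2) * (q + 1 - t)) + (\<Sum>t<q. q * (t + 2))"
    by (rule sum.distrib)
  also have "(\<Sum>t<q. q * (t + 2)) = q * (\<Sum>t<q. t + 2)" by (rule sum_distrib_left[symmetric])
  finally have "6 * (\<Sum>t<q. (t + 2) * (2 * q + 1 - t)) = 6 * (\<Sum>t<q. (t + 2) * (q + 1 - t)) + 3 * q * (2 * (\<Sum>t<q. t + 2))"
    by simp
  also have "\<dots> = q ^ 3 + 9 * q ^ 2 + 14 * q + 3 * q * (q * (q + 3))" using sumA[of q] sum_t2[of q] by simp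
  also have "\<dots> = 4 * q ^ 3 + 18 * q ^ 2 + 14 * q" by (simp add: power2_eq_square power3_eq_cube algebra_simps)
  finally show ?thesis .
qed

lemma wilf_partitions_finite: "finite (wilf_partitions n)"
proof (rule finite_subset)
  show "wilf_partitions n \<subseteq> Pow ({1..n}\<times>{1..n})"
    using wilf_in_Fam(1) by (auto simp: wilf_partitions_def Fam_def)
qed simp

lemma Gr_sum_f:
  assumes p: "p \<in> Perms b q" and b: "b \<ge> 2"
  shows "6 * (\<Sum>x\<in>Gr b q 2 2 p. fst x * snd x) \<le> b ^ 3 * (q ^ 3 + 9 * q ^ 2 + 14 * q)"
proof -
  have "(\<Sum>x\<in>Gr b q 2 2 p. fst x * snd x) \<le> b * (\<Sum>t<q. (2 + Suc t * b) * (2 + (q - t) * b))"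
    by (rule Gr_sum[OF p])
  also have "(\<Sum>t<q. (2 + Suc t * b) * (2 + (q - t) * b)) \<le> (\<Sum>t<q. (b * b) * ((t + 2) * (q + 1 - t)))"
  proof (rule sum_mono)
    fix t assume t: "t \<in> {..<q}"
    have "2 + Suc t * b \<le> (t + 2) * b" using b by (simp add: algebra_simps)
    moreover have "2 + (q - t) * b \<le> (q + 1 - t) * b"
    proof -
      have "q + 1 - t = Suc (q - t)" using t by auto
      thus ?thesis using b by simp
    qed
    ultimately have "(2 + Suc t * b) * (2 + (q - t) * b) \<le> ((t + 2) * b) * ((q + 1 - t) * b)"
      by (rule mult_mono) auto
    also have "((t + 2) * b) * ((q + 1 - t) * b) = (b * b) * ((t + 2) * (q + 1 - t))"
      by (simp only: mult_ac)
    finally show "(2 + Suc t * b) * (2 + (q - t) * b) \<le> (b * b) * ((t + 2) * (q + 1 - t))" .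
  qed
  also have "\<dots> = (b * b) * (\<Sum>t<q. (t + 2) * (q + 1 - t))" by (rule sum_distrib_left[symmetric])
  finally have "(\<Sum>x\<in>Gr b q 2 2 p. fst x * snd x) \<le> b * ((b * b) * (\<Sum>t<q. (t + 2) * (q + 1 - t)))"
    by simp
  hence "6 * (\<Sum>x\<in>Gr b q 2 2 p. fst x * snd x) \<le> b ^ 3 * (6 * (\<Sum>t<q. (t + 2) * (q + 1 - t)))"
    by (simp add: power3_eq_cube mult_ac)
  thus ?thesis by (simp only: sumA)
qed

lemma wilf_count_lower:
  assumes b: "b \<ge> 2" and bn: "b ^ 3 * (q + 4) ^ 3 \<le> 6 * n"
  shows "fact b ^ q \<le> wilf_count n"
proof -
  define S where "S p = (\<Sum>x\<in>Gr b q 2 2 p. fst x * snd x)" for p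
  define PP where "PP p = insert (1, n - S p) (Gr b q 2 2 p)" for p
  have Sn: "S p + 2 + q * b \<le> n" if p: "p \<in> Perms b q" for p
  proof -
    define B where "B = b ^ 3"
    define X where "X = B * q ^ 3"
    define Y where "Y = B * q ^ 2"
    define Z where "Z = B * q"
    have bB: "b \<le> B" unfolding B_def using b by (simp add: power3_eq_cube)
    have B1: "1 \<le> B" using bB b by simp
    have qb: "q * b \<le> Z" unfolding Z_def using bB by (simp add: mult.commute)
    have e: "B * (q + 4) ^ 3 = X + 12 * Y + 48 * Z + 64 * B"
      unfolding X_def Y_def Z_def by (simp add: power2_eq_square power3_eq_cube algebra_simps)
    have e2: "B * (q ^ 3 + 9 * q ^ 2 + 14 * q) = X + 9 * Y + 14 * Z"
      unfolding X_def Y_def Z_def by (simp add: algebra_simps)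
    have s6: "6 * S p \<le> B * (q ^ 3 + 9 * q ^ 2 + 14 * q)" unfolding S_def B_def by (rule Gr_sum_f[OF p b])
    have nn: "B * (q + 4) ^ 3 \<le> 6 * n" using bn by (simp add: B_def)
    from s6 nn e e2 qb B1 show ?thesis by linarith
  qed
  have W: "wilf_partition n (PP p)" if p: "p \<in> Perms b q" for p
  proof -
    have R: "n - S p \<ge> 2 + q * b" using Sn[OF p] by simp
    have rng: "\<And>x. x \<in> Gr b q 2 2 p \<Longrightarrow> 2 \<le> fst x \<and> 2 \<le> snd x \<and> snd x < 2 + q * b"
      using Gr_range[OF p] by blast
    have nin: "(1, n - S p) \<notin> Gr b q 2 2 p" using rng by fastforce
    have fin: "finite (Gr b q 2 2 p)" by (simp add: Gr_def)
    have i1: "inj_on fst (PP p)"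
      unfolding PP_def inj_on_insert using Gr_inj_fst rng by force
    have i2: "inj_on snd (PP p)"
      unfolding PP_def inj_on_insert using Gr_inj_snd[OF p] rng R by force
    have pos: "\<forall>(a, m)\<in>PP p. 1 \<le> a \<and> 1 \<le> m" unfolding PP_def using rng R by force
    have "(\<Sum>x\<in>PP p. fst x * snd x) = (n - S p) + S p"
      unfolding PP_def using sum.insert[OF fin nin, of "\<lambda>x. fst x * snd x"] by (simp add: S_def)
    also have "\<dots> = n" using Sn[OF p] by simp
    finally have sm: "(\<Sum>(a, m)\<in>PP p. a * m) = n" by (simp add: wilf_sum_eq)
    show ?thesis unfolding wilf_partition_def using fin i1 i2 pos sm by (simp add: PP_def)
  qed
  have inj: "inj_on PP (Perms b q)"
  proof (rule inj_onI)
    fix p p' assume p: "p \<in> Perms b q" and p': "p' \<in> Perms b q" and e: "PP p = PP p'"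
    have g: "Gr b q 2 2 r = {x \<in> PP r. fst x \<noteq> 1}" if "r \<in> Perms b q" for r
      using Gr_range[OF that, of _ 2 2] by (fastforce simp: PP_def)
    have "Gr b q 2 2 p = Gr b q 2 2 p'" using g[OF p] g[OF p'] e by simp
    thus "p = p'" using Gr_inj_perm p p' by (metis inj_onD)
  qed
  have "fact b ^ q = card (PP ` Perms b q)" using card_image[OF inj] card_Perms by simp
  also have "\<dots> \<le> card (wilf_partitions n)"
    by (rule card_mono[OF wilf_partitions_finite]) (use W in \<open>auto simp: wilf_partitions_def\<close>)
  finally show ?thesis by (simp add: wilf_count_def)
qed

lemma Gr_sum_F:
  assumes p: "p \<in> Perms b q" and b: "b \<ge> 4"
  shows "6 * (\<Sum>x\<in>Gr b q 4 (4 + q * b) p. fst x * snd x) \<le> b ^ 3 * (4 * q ^ 3 + 18 * q ^ 2 + 14 * q)"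
proof -
  have "(\<Sum>x\<in>Gr b q 4 (4 + q * b) p. fst x * snd x) \<le> b * (\<Sum>t<q. (4 + Suc t * b) * ((4 + q * b) + (q - t) * b))"
    by (rule Gr_sum[OF p])
  also have "(\<Sum>t<q. (4 + Suc t * b) * ((4 + q * b) + (q - t) * b)) \<le> (\<Sum>t<q. (b * b) * ((t + 2) * (2 * q + 1 - t)))"
  proof (rule sum_mono)
    fix t assume t: "t \<in> {..<q}"
    have "4 + Suc t * b \<le> (t + 2) * b" using b by (simp add: algebra_simps)
    moreover have "(4 + q * b) + (q - t) * b \<le> (2 * q + 1 - t) * b"
    proof -
      have h: "2 * q + 1 - t = Suc (q + (q - t))" using t by auto
      have "Suc (q + (q - t)) * b = b + q * b + (q - t) * b" by (simp add: add_mult_distrib)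
      thus ?thesis using b h by simp
    qed
    ultimately have "(4 + Suc t * b) * ((4 + q * b) + (q - t) * b) \<le> ((t + 2) * b) * ((2 * q + 1 - t) * b)"
      by (rule mult_mono) auto
    also have "((t + 2) * b) * ((2 * q + 1 - t) * b) = (b * b) * ((t + 2) * (2 * q + 1 - t))"
      by (simp only: mult_ac)
    finally show "(4 + Suc t * b) * ((4 + q * b) + (q - t) * b) \<le> (b * b) * ((t + 2) * (2 * q + 1 - t))" .
  qed
  also have "\<dots> = (b * b) * (\<Sum>t<q. (t + 2) * (2 * q + 1 - t))" by (rule sum_distrib_left[symmetric])
  finally have "(\<Sum>x\<in>Gr b q 4 (4 + q * b) p. fst x * snd x) \<le> b * ((b * b) * (\<Sum>t<q. (t + 2) * (2 * q + 1 - t)))"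
    by simp
  hence "6 * (\<Sum>x\<in>Gr b q 4 (4 + q * b) p. fst x * snd x) \<le> b ^ 3 * (6 * (\<Sum>t<q. (t + 2) * (2 * q + 1 - t)))"
    by (simp add: power3_eq_cube mult_ac)
  thus ?thesis by (simp only: sumB)
qed

lemma inj_on_Un_disj: "inj_on f A \<Longrightarrow> inj_on f B \<Longrightarrow> f ` A \<inter> f ` B = {} \<Longrightarrow> inj_on f (A \<union> B)"
  by (auto simp: inj_on_Un)

lemma sw_image_Gr: "fst ` (sw ` A) = snd ` A" "snd ` (sw ` A) = fst ` A"
  by (force simp: sw_def)+

lemma fixed_count_lower:
  assumes b: "b \<ge> 4" and bn: "4 * b ^ 3 * (q + 3) ^ 3 \<le> 3 * n"
  shows "fact b ^ q \<le> wilf_fixed_count n"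
proof -
  define c where "c = 4 + q * b"
  define G where "G p = Gr b q 4 c p" for p
  define S where "S p = (\<Sum>x\<in>G p. fst x * snd x)" for p
  define e where "e = (if odd n then 9 else (0::nat))"
  define E where "E = (if odd n then {(3, 3)} else ({} :: (nat \<times> nat) set))"
  define R where "R p = (n - e - 2 * S p) div 2" for p
  define T where "T p = {(1, R p), (R p, 1)}" for p
  define PP where "PP p = G p \<union> sw ` G p \<union> E \<union> T p" for p
  have Sn: "2 * S p + e + 8 + 4 * (q * b) \<le> n" if p: "p \<in> Perms b q" for p
  proof -
    define B where "B = b ^ 3"
    define X where "X = B * q ^ 3"
    define Y where "Y = B * q ^ 2"
    define Z where "Z = B * q"
    have bB: "b \<le> B" unfolding B_def using b by (simp add: power3_eq_cube)
    have B1: "1 \<le> B" using bB b by simp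
    have qb: "q * b \<le> Z" unfolding Z_def using bB by (simp add: mult.commute)
    have ee: "4 * B * (q + 3) ^ 3 = 4 * X + 36 * Y + 108 * Z + 108 * B"
      unfolding X_def Y_def Z_def by (simp add: power2_eq_square power3_eq_cube algebra_simps)
    have e2: "B * (4 * q ^ 3 + 18 * q ^ 2 + 14 * q) = 4 * X + 18 * Y + 14 * Z"
      unfolding X_def Y_def Z_def by (simp add: algebra_simps)
    have s6: "6 * S p \<le> B * (4 * q ^ 3 + 18 * q ^ 2 + 14 * q)"
      unfolding S_def B_def G_def c_def by (rule Gr_sum_F[OF p b])
    have nn: "4 * B * (q + 3) ^ 3 \<le> 3 * n" using bn by (simp add: B_def)
    have e9: "e \<le> 9" by (simp add: e_def)
    have s6': "6 * S p \<le> 4 * X + 18 * Y + 14 * Z" using s6 e2 by simp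
    have nn': "4 * X + 36 * Y + 108 * Z + 108 * B \<le> 3 * n" using nn ee by simp
    have h1: "6 * S p + 3 * e + 24 + 12 * (q * b) \<le> 4 * X + 18 * Y + 26 * Z + 51" using s6' qb e9 by linarith
    have h2: "4 * X + 18 * Y + 26 * Z + 51 \<le> 3 * n" using nn' B1 by linarith
    from h1 h2 show ?thesis by linarith
  qed
  have Rn: "n = 2 * S p + e + 2 * R p" "R p \<ge> c + q * b" if p: "p \<in> Perms b q" for p
  proof -
    have ev: "even (n - e - 2 * S p)"
    proof -
      have "e \<le> n" using Sn[OF p] by simp
      thus ?thesis by (cases "odd n") (auto simp: e_def)
    qed
    thus "n = 2 * S p + e + 2 * R p" using Sn[OF p] unfolding R_def by (auto elim!: evenE)
    have "8 + 4 * (q * b) \<le> n - e - 2 * S p" using Sn[OF p] by linarith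
    moreover have "2 * (c + q * b) = 8 + 4 * (q * b)" by (simp add: c_def)
    ultimately have "2 * (c + q * b) \<le> n - e - 2 * S p" by (metis)
    hence "(2 * (c + q * b)) div 2 \<le> (n - e - 2 * S p) div 2" by (rule div_le_mono)
    thus "R p \<ge> c + q * b" unfolding R_def by simp
  qed
  have fin: "finite (PP p)" for p by (simp add: PP_def G_def Gr_def E_def T_def)
  have W: "wilf_partition n (PP p)" "iota (PP p) = PP p" if p: "p \<in> Perms b q" for p
  proof -
    have rng: "\<And>x. x \<in> G p \<Longrightarrow> 4 \<le> fst x \<and> fst x < c \<and> c \<le> snd x \<and> snd x < c + q * b"
      using Gr_range[OF p, of _ 4 c] unfolding G_def c_def by blast
    have R: "R p \<ge> c + q * b" "c \<ge> 4" using Rn[OF p] by (auto simp: c_def)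
    have fG: "finite (G p)" by (simp add: G_def Gr_def)
    have fstG: "fst ` G p \<subseteq> {4..<c}" "snd ` G p \<subseteq> {c..<c + q * b}" using rng by auto
    have fstE: "fst ` E \<subseteq> {3}" "snd ` E \<subseteq> {3}" by (auto simp: E_def)
    have fstT: "fst ` T p = {1, R p}" "snd ` T p = {R p, 1}" by (auto simp: T_def)
    have symm: "sw ` PP p = PP p"
    proof -
      have "sw ` PP p = sw ` G p \<union> sw ` sw ` G p \<union> sw ` E \<union> sw ` T p" by (simp add: PP_def image_Un)
      also have "sw ` sw ` G p = G p" by (simp add: image_image)
      also have "sw ` E = E" by (auto simp: E_def sw_def)
      also have "sw ` T p = T p" by (auto simp: T_def sw_def)
      finally show ?thesis by (auto simp: PP_def)
    qed
    show "iota (PP p) = PP p" using symm by (simp add: iota_sw)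
    have i1: "inj_on fst (PP p)"
      unfolding PP_def
    proof (intro inj_on_Un_disj)
      show "inj_on fst (G p)" by (simp add: G_def Gr_inj_fst)
      show "inj_on fst (sw ` G p)"
        using Gr_inj_snd[OF p, of 4 c] unfolding G_def
        by (simp add: inj_on_def sw_def) (metis prod.collapse)
      show "inj_on fst E" by (simp add: E_def)
      show "inj_on fst (T p)" using R by (simp add: T_def)
      have "fst ` G p \<inter> snd ` G p \<subseteq> {4..<c} \<inter> {c..<c + q * b}" using fstG by blast
      also have "\<dots> = {}" by auto
      finally show "fst ` G p \<inter> fst ` (sw ` G p) = {}" by (simp add: sw_image_Gr)
      have "fst ` (G p \<union> sw ` G p) = fst ` G p \<union> snd ` G p" by (simp add: image_Un sw_image_Gr)
      also have "\<dots> \<subseteq> {4..<c} \<union> {c..<c + q * b}" using fstG by blast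
      also have "\<dots> \<subseteq> {4..<c + q * b}" using R(2) by auto
      finally have U1: "fst ` (G p \<union> sw ` G p) \<subseteq> {4..<c + q * b}" .
      have "fst ` (G p \<union> sw ` G p) \<inter> fst ` E \<subseteq> {4..<c + q * b} \<inter> {3}" using U1 fstE by blast
      also have "\<dots> = {}" by auto
      finally show "fst ` (G p \<union> sw ` G p) \<inter> fst ` E = {}" by simp
      have "fst ` (G p \<union> sw ` G p \<union> E) = fst ` (G p \<union> sw ` G p) \<union> fst ` E" by (rule image_Un)
      also have "\<dots> \<subseteq> {4..<c + q * b} \<union> {3}" using U1 fstE by blast
      also have "\<dots> \<subseteq> {3..<c + q * b}" using R(2) by auto
      finally have U2: "fst ` (G p \<union> sw ` G p \<union> E) \<subseteq> {3..<c + q * b}" .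
      have "fst ` (G p \<union> sw ` G p \<union> E) \<inter> fst ` T p \<subseteq> {3..<c + q * b} \<inter> {1, R p}" using U2 fstT by blast
      also have "\<dots> = {}" using R by auto
      finally show "fst ` (G p \<union> sw ` G p \<union> E) \<inter> fst ` T p = {}" by simp
    qed
    have i2: "inj_on snd (PP p)"
    proof -
      have "inj_on (fst \<circ> sw) (PP p)"
        by (rule comp_inj_on[OF inj_sw]) (simp add: symm i1)
      moreover have "fst \<circ> sw = snd" by (auto simp: sw_def)
      ultimately show ?thesis by simp
    qed
    have pos0: "1 \<le> fst x \<and> 1 \<le> snd x" if x: "x \<in> PP p" for x
      using x unfolding PP_def
    proof (elim UnE)
      assume "x \<in> G p" thus ?thesis using rng[of x] by auto
    next
      assume "x \<in> sw ` G p"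
      then obtain y where "y \<in> G p" "x = sw y" by auto
      thus ?thesis using rng[of y] by (auto simp: sw_def)
    next
      assume "x \<in> E" thus ?thesis by (auto simp: E_def split: if_splits)
    next
      assume "x \<in> T p" thus ?thesis using R by (auto simp: T_def)
    qed
    have pos: "\<forall>(a, m)\<in>PP p. 1 \<le> a \<and> 1 \<le> m" using pos0 by fastforce
    have d1: "G p \<inter> sw ` G p = {}"
    proof (rule ccontr)
      assume "G p \<inter> sw ` G p \<noteq> {}"
      then obtain x y where "x \<in> G p" "y \<in> G p" "x = sw y" by auto
      thus False using rng[of x] rng[of y] by (simp add: sw_def)
    qed
    have d2: "(G p \<union> sw ` G p) \<inter> E = {}"
    proof (rule ccontr)
      assume "(G p \<union> sw ` G p) \<inter> E \<noteq> {}"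
      then obtain x where x: "x \<in> G p \<union> sw ` G p" "x \<in> E" by auto
      hence x3: "x = (3, 3)" by (auto simp: E_def split: if_splits)
      from x(1) show False
      proof
        assume "x \<in> G p" thus False using rng[of x] x3 by simp
      next
        assume "x \<in> sw ` G p"
        then obtain y where "y \<in> G p" "x = sw y" by auto
        thus False using rng[of y] x3 R by (auto simp: sw_def)
      qed
    qed
    have d3: "(G p \<union> sw ` G p \<union> E) \<inter> T p = {}"
    proof (rule ccontr)
      assume "(G p \<union> sw ` G p \<union> E) \<inter> T p \<noteq> {}"
      then obtain x where x: "x \<in> G p \<union> sw ` G p \<union> E" "x \<in> T p" by auto
      hence xT: "x = (1, R p) \<or> x = (R p, 1)" by (auto simp: T_def)
      from x(1) show False
      proof (elim UnE)
        assume "x \<in> G p" thus False using rng[of x] xT R by auto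
      next
        assume "x \<in> sw ` G p"
        then obtain y where "y \<in> G p" "x = sw y" by auto
        thus False using rng[of y] xT R by (auto simp: sw_def)
      next
        assume "x \<in> E" thus False using xT R by (auto simp: E_def split: if_splits)
      qed
    qed
    let ?f = "\<lambda>x. fst x * snd x"
    have "(\<Sum>x\<in>PP p. ?f x) = (\<Sum>x\<in>G p \<union> sw ` G p \<union> E. ?f x) + (\<Sum>x\<in>T p. ?f x)"
      unfolding PP_def by (rule sum.union_disjoint) (use fG d3 in \<open>auto simp: E_def T_def\<close>)
    also have "(\<Sum>x\<in>G p \<union> sw ` G p \<union> E. ?f x) = (\<Sum>x\<in>G p \<union> sw ` G p. ?f x) + (\<Sum>x\<in>E. ?f x)"
      by (rule sum.union_disjoint) (use fG d2 in \<open>auto simp: E_def\<close>)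
    also have "(\<Sum>x\<in>G p \<union> sw ` G p. ?f x) = (\<Sum>x\<in>G p. ?f x) + (\<Sum>x\<in>sw ` G p. ?f x)"
      by (rule sum.union_disjoint) (use fG d1 in auto)
    also have "(\<Sum>x\<in>sw ` G p. ?f x) = (\<Sum>x\<in>G p. ?f x)"
      by (subst sum.reindex[OF inj_sw]) (simp add: sw_def mult.commute)
    also have "(\<Sum>x\<in>E. ?f x) = e" by (simp add: E_def e_def)
    also have "(\<Sum>x\<in>T p. ?f x) = 2 * R p" using R by (simp add: T_def)
    finally have "(\<Sum>x\<in>PP p. ?f x) = n" using Rn[OF p] by (simp add: S_def)
    hence sm: "(\<Sum>(a, m)\<in>PP p. a * m) = n" by (simp add: wilf_sum_eq)
    show "wilf_partition n (PP p)" unfolding wilf_partition_def using fin i1 i2 pos sm by simp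
  qed
  have inj: "inj_on PP (Perms b q)"
  proof (rule inj_onI)
    fix p p' assume p: "p \<in> Perms b q" and p': "p' \<in> Perms b q" and eq: "PP p = PP p'"
    have g: "G r = {x \<in> PP r. 4 \<le> fst x \<and> fst x < c}" if r: "r \<in> Perms b q" for r
    proof -
      have rng: "\<And>x. x \<in> G r \<Longrightarrow> 4 \<le> fst x \<and> fst x < c \<and> c \<le> snd x"
        using Gr_range[OF r, of _ 4 c] unfolding G_def c_def by blast
      have R: "R r \<ge> c + q * b" using Rn[OF r] by simp
      show ?thesis
      proof (intro equalityI subsetI)
        fix x assume "x \<in> G r" thus "x \<in> {x \<in> PP r. 4 \<le> fst x \<and> fst x < c}"
          using rng[of x] by (simp add: PP_def)
      next
        fix x assume x: "x \<in> {x \<in> PP r. 4 \<le> fst x \<and> fst x < c}"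
        hence xr: "4 \<le> fst x" "fst x < c" and "x \<in> G r \<union> sw ` G r \<union> E \<union> T r"
          by (auto simp: PP_def)
        thus "x \<in> G r"
        proof (elim UnE)
          assume "x \<in> sw ` G r"
          then obtain y where "y \<in> G r" "x = sw y" by auto
          thus ?thesis using rng[of y] xr by (auto simp: sw_def)
        next
          assume "x \<in> E" thus ?thesis using xr by (auto simp: E_def split: if_splits)
        next
          assume "x \<in> T r" thus ?thesis using xr R by (auto simp: T_def)
        qed
      qed
    qed
    have "G p = G p'" using g[OF p] g[OF p'] eq by simp
    thus "p = p'" using Gr_inj_perm p p' unfolding G_def by (metis inj_onD)
  qed
  have finFX: "finite {P \<in> wilf_partitions n. iota P = P}"
    using wilf_partitions_finite by simp
  have "fact b ^ q = card (PP ` Perms b q)" using card_image[OF inj] card_Perms by simp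
  also have "\<dots> \<le> card {P \<in> wilf_partitions n. iota P = P}"
    by (rule card_mono[OF finFX]) (use W in \<open>auto simp: wilf_partitions_def\<close>)
  finally show ?thesis by (simp add: wilf_fixed_count_def)
qed

lemma lim_Uf: "((\<lambda>n::nat. (ln ((6 * real n) powr (1/3) + 1) + (6 * real n) powr (1/3) + (6 * real n) powr (1/3) * ln (exp 2 * real n * (1 + ln (real n)) / ((6 * real n) powr (1/3)) ^ 2)) / (2 * ((1/6) * (6 * real n) powr (1/3) * ln (real n)))) \<longlongrightarrow> 1) at_top"
  by real_asymp

lemma lim_UF: "((\<lambda>n::nat. (2 * ln ((6 * real n) powr (1/3) + 1) + (6 * real n) powr (1/3) + ((6 * real n) powr (1/3) / 2) * ln (4 * (exp 2 * real n * (1 + ln (real n))) / ((6 * real n) powr (1/3)) ^ 2)) / ((1/6) * (6 * real n) powr (1/3) * ln (real n))) \<longlongrightarrow> 1) at_top"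
  by real_asymp

lemma ev_Bf: "eventually (\<lambda>n::nat. exp 2 * real n * (1 + ln (real n)) / ((6 * real n) powr (1/3)) ^ 2 \<ge> 1) at_top"
  by real_asymp

lemma ev_gF: "eventually (\<lambda>n::nat. 4 * (exp 2 * real n * (1 + ln (real n))) / ((6 * real n) powr (1/3)) ^ 2 \<ge> 1) at_top"
  by real_asymp

lemma ev_T: "eventually (\<lambda>n::nat. (1/6) * (6 * real n) powr (1/3) * ln (real n) > 0) at_top"
  by real_asymp

lemma lim_Lf: fixes q :: real assumes "q > 0"
  shows "((\<lambda>n::nat. q * (((6 * real n) powr (1/3) / (q + 4) - 1) * ln ((6 * real n) powr (1/3) / (q + 4) - 1) - (6 * real n) powr (1/3) / (q + 4)) / (2 * ((1/6) * (6 * real n) powr (1/3) * ln (real n)))) \<longlongrightarrow> q * inverse (q + 4)) at_top"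
  using assms by real_asymp

lemma lim_LF: fixes q :: real assumes "q > 0"
  shows "((\<lambda>n::nat. q * (((6 * real n) powr (1/3) / (2 * (q + 3)) - 1) * ln ((6 * real n) powr (1/3) / (2 * (q + 3)) - 1) - (6 * real n) powr (1/3) / (2 * (q + 3))) / ((1/6) * (6 * real n) powr (1/3) * ln (real n))) \<longlongrightarrow> 2 * (q * inverse (2 * q + 6))) at_top"
  using assms by real_asymp

lemma ev_xf: fixes q :: real assumes "q > 0"
  shows "eventually (\<lambda>n::nat. (6 * real n) powr (1/3) / (q + 4) \<ge> 3) at_top"
  using assms by real_asymp

lemma ev_xF: fixes q :: real assumes "q > 0"
  shows "eventually (\<lambda>n::nat. (6 * real n) powr (1/3) / (2 * (q + 3)) \<ge> 5) at_top"
  using assms by real_asymp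

lemma lim_r: "((\<lambda>q::nat. real q * inverse (real q + c)) \<longlongrightarrow> 1) at_top"
  by real_asymp

lemma lim_r2: "((\<lambda>q::nat. 2 * (real q * inverse (2 * real q + 6))) \<longlongrightarrow> 1) at_top"
  by real_asymp

lemma squeeze:
  fixes g U T :: "nat \<Rightarrow> real" and Lq :: "nat \<Rightarrow> nat \<Rightarrow> real" and r :: "nat \<Rightarrow> real"
  assumes up: "eventually (\<lambda>n. g n \<le> U n) at_top"
    and Ulim: "((\<lambda>n. U n / T n) \<longlongrightarrow> 1) at_top"
    and Tpos: "eventually (\<lambda>n. T n > 0) at_top"
    and low: "\<And>q. q \<ge> 1 \<Longrightarrow> eventually (\<lambda>n. Lq q n \<le> g n) at_top"
    and Llim: "\<And>q. q \<ge> 1 \<Longrightarrow> ((\<lambda>n. Lq q n / T n) \<longlongrightarrow> r q) at_top"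
    and rlim: "(r \<longlongrightarrow> 1) at_top"
  shows "((\<lambda>n. g n / T n) \<longlongrightarrow> 1) at_top"
proof (rule tendstoI)
  fix e :: real assume e: "e > 0"
  have "eventually (\<lambda>q. dist (r q) 1 < e / 2) at_top" using rlim e by (intro tendstoD) auto
  then obtain N where N: "\<And>q. q \<ge> N \<Longrightarrow> dist (r q) 1 < e / 2" by (auto simp: eventually_at_top_linorder)
  define q where "q = max N 1"
  have q1: "q \<ge> 1" by (simp add: q_def)
  have "\<bar>r q - 1\<bar> < e / 2" using N[of q] by (simp add: q_def dist_real_def)
  moreover have "- (r q - 1) \<le> \<bar>r q - 1\<bar>" by (rule abs_ge_minus_self)
  ultimately have rq: "r q > 1 - e / 2" by linarith
  have ev1: "eventually (\<lambda>n. dist (Lq q n / T n) (r q) < e / 2) at_top"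
    using Llim[OF q1] e by (intro tendstoD) auto
  have ev2: "eventually (\<lambda>n. dist (U n / T n) 1 < e) at_top" using Ulim e by (intro tendstoD) auto
  show "eventually (\<lambda>n. dist (g n / T n) 1 < e) at_top"
    using ev1 ev2 up Tpos low[OF q1]
  proof eventually_elim
    case (elim n)
    have "g n / T n \<le> U n / T n" using elim by (intro divide_right_mono) auto
    moreover have "Lq q n / T n \<le> g n / T n" using elim by (intro divide_right_mono) auto
    moreover have "\<bar>Lq q n / T n - r q\<bar> < e / 2" using elim(1) unfolding dist_real_def .
    moreover have "\<bar>U n / T n - 1\<bar> < e" using elim(2) unfolding dist_real_def .
    moreover have "- (Lq q n / T n - r q) \<le> \<bar>Lq q n / T n - r q\<bar>" by (rule abs_ge_minus_self)
    moreover have "U n / T n - 1 \<le> \<bar>U n / T n - 1\<bar>" by (rule abs_ge_self)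
    ultimately have "- e < g n / T n - 1" "g n / T n - 1 < e" using rq by linarith+
    thus ?case unfolding dist_real_def by (simp add: abs_less_iff)
  qed
qed

lemma ln_fact_ge: "real b * ln (real b) - real b \<le> ln (fact b)" if "b \<ge> 1"
proof -
  have "ln ((real b / exp 1) ^ b) \<le> ln (fact b)"
    using that fact_ge_pow[of b] by (intro ln_mono) auto
  moreover have "ln ((real b / exp 1) ^ b) = real b * (ln (real b) - 1)"
    using that by (simp add: ln_realpow ln_div)
  ultimately show ?thesis by (simp add: algebra_simps)
qed

lemma floor_bound:
  fixes x :: real assumes x: "x \<ge> 3"
  shows "(x - 1) * ln (x - 1) - x \<le> real (nat \<lfloor>x\<rfloor>) * ln (real (nat \<lfloor>x\<rfloor>)) - real (nat \<lfloor>x\<rfloor>)"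
    "real (nat \<lfloor>x\<rfloor>) \<le> x" "x - 1 \<le> real (nat \<lfloor>x\<rfloor>)"
proof -
  show b1: "real (nat \<lfloor>x\<rfloor>) \<le> x" using x by (simp add: of_nat_nat)
  show b2: "x - 1 \<le> real (nat \<lfloor>x\<rfloor>)" using x by (simp add: of_nat_nat)
  have "(x - 1) * ln (x - 1) \<le> real (nat \<lfloor>x\<rfloor>) * ln (real (nat \<lfloor>x\<rfloor>))"
    using b2 x by (intro mult_mono ln_mono) auto
  thus "(x - 1) * ln (x - 1) - x \<le> real (nat \<lfloor>x\<rfloor>) * ln (real (nat \<lfloor>x\<rfloor>)) - real (nat \<lfloor>x\<rfloor>)"
    using b1 by linarith
qed

lemma cube_a: "((6 * real n) powr (1/3)) ^ 3 = 6 * real n"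
proof -
  have "((6 * real n) powr (1/3)) ^ 3 = ((6 * real n) powr (1/3)) powr (real 3)"
  proof (cases "n = 0")
    case False
    thus ?thesis by (subst powr_realpow) auto
  qed simp
  also have "\<dots> = 6 * real n" by (simp add: powr_powr)
  finally show ?thesis .
qed

lemma ln_count_lower:
  fixes b q :: nat and C :: nat assumes "fact b ^ q \<le> C" "b \<ge> 1"
  shows "real q * (real b * ln (real b) - real b) \<le> ln (real C)"
proof -
  have "real q * (real b * ln (real b) - real b) \<le> real q * ln (fact b)"
    using ln_fact_ge[OF assms(2)] by (intro mult_left_mono) auto
  also have "\<dots> = ln ((fact b :: real) ^ q)" by (simp add: ln_realpow)
  also have "\<dots> \<le> ln (real C)"
  proof (rule ln_mono)
    show "0 < (fact b :: real) ^ q" by simp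
    have "real (fact b ^ q) \<le> real C" using assms(1) by (rule of_nat_mono)
    thus "(fact b :: real) ^ q \<le> real C" by simp
  qed
  finally show ?thesis .
qed

lemma f_lower_ev:
  fixes q :: nat assumes q: "q \<ge> 1"
  shows "eventually (\<lambda>n. real q * (((6 * real n) powr (1/3) / (real q + 4) - 1) * ln ((6 * real n) powr (1/3) / (real q + 4) - 1) - (6 * real n) powr (1/3) / (real q + 4)) \<le> ln (real (wilf_count n))) at_top"
proof -
  have ev: "eventually (\<lambda>n. (6 * real n) powr (1/3) / (real q + 4) \<ge> 3) at_top" using ev_xf[of "real q"] q by simp
  from ev show ?thesis
  proof (eventually_elim)
  case (elim n)
  define x where "x = (6 * real n) powr (1/3) / (real q + 4)"
  define b where "b = nat \<lfloor>x\<rfloor>"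
  have x3: "x \<ge> 3" using elim by (simp add: x_def)
  note fb = floor_bound[OF x3, folded b_def]
  have b2: "b \<ge> 2" using fb(3) x3 by linarith
  have "(real b * (real q + 4)) ^ 3 \<le> (x * (real q + 4)) ^ 3"
    using fb(2) by (intro power_mono mult_right_mono) auto
  also have "x * (real q + 4) = (6 * real n) powr (1/3)" by (simp add: x_def)
  also have "\<dots> ^ 3 = 6 * real n" by (rule cube_a)
  finally have "real (b ^ 3 * (q + 4) ^ 3) \<le> real (6 * n)" by (simp add: power_mult_distrib)
  hence "b ^ 3 * (q + 4) ^ 3 \<le> 6 * n" by (simp only: of_nat_le_iff)
  hence C: "fact b ^ q \<le> wilf_count n" by (rule wilf_count_lower[OF b2])
  have "real q * ((x - 1) * ln (x - 1) - x) \<le> real q * (real b * ln (real b) - real b)"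
    using fb(1) by (intro mult_left_mono) auto
  also have "\<dots> \<le> ln (real (wilf_count n))" using ln_count_lower[OF C] b2 by simp
  finally show ?case by (simp add: x_def)
qed
qed

lemma F_lower_ev:
  fixes q :: nat assumes q: "q \<ge> 1"
  shows "eventually (\<lambda>n. real q * (((6 * real n) powr (1/3) / (2 * (real q + 3)) - 1) * ln ((6 * real n) powr (1/3) / (2 * (real q + 3)) - 1) - (6 * real n) powr (1/3) / (2 * (real q + 3))) \<le> ln (real (wilf_fixed_count n))) at_top"
proof -
  have ev: "eventually (\<lambda>n. (6 * real n) powr (1/3) / (2 * (real q + 3)) \<ge> 5) at_top" using ev_xF[of "real q"] q by simp
  from ev show ?thesis
  proof (eventually_elim)
  case (elim n)
  define x where "x = (6 * real n) powr (1/3) / (2 * (real q + 3))"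
  define b where "b = nat \<lfloor>x\<rfloor>"
  have x3: "x \<ge> 3" and x5: "x \<ge> 5" using elim by (simp_all add: x_def)
  note fb = floor_bound[OF x3, folded b_def]
  have b4: "b \<ge> 4" using fb(3) x5 by linarith
  have "(real b * (2 * (real q + 3))) ^ 3 \<le> (x * (2 * (real q + 3))) ^ 3"
    using fb(2) by (intro power_mono mult_right_mono) auto
  also have "x * (2 * (real q + 3)) = (6 * real n) powr (1/3)" by (simp add: x_def)
  also have "\<dots> ^ 3 = 6 * real n" by (rule cube_a)
  finally have h: "(real b * (2 * (real q + 3))) ^ 3 \<le> 6 * real n" .
  have "(real b * (2 * (real q + 3))) ^ 3 = 8 * (real b ^ 3 * (real q + 3) ^ 3)"
    by (simp only: power_mult_distrib) simp
  hence "8 * (real b ^ 3 * (real q + 3) ^ 3) \<le> 6 * real n" using h by simp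
  hence "real (4 * b ^ 3 * (q + 3) ^ 3) \<le> real (3 * n)" by simp
  hence "4 * b ^ 3 * (q + 3) ^ 3 \<le> 3 * n" by (simp only: of_nat_le_iff)
  hence C: "fact b ^ q \<le> wilf_fixed_count n" by (rule fixed_count_lower[OF b4])
  have "real q * ((x - 1) * ln (x - 1) - x) \<le> real q * (real b * ln (real b) - real b)"
    using fb(1) by (intro mult_left_mono) auto
  also have "\<dots> \<le> ln (real (wilf_fixed_count n))" using ln_count_lower[OF C] b4 by simp
  finally show ?case by (simp add: x_def)
qed
qed

theorem theorem1:
  shows "(\<lambda>n. ln (real (wilf_fixed_count n))) \<sim>[at_top] (\<lambda>n. ln (real (wilf_count n)) / 2)
     \<and> (\<lambda>n. ln (real (wilf_count n)) / 2) \<sim>[at_top]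
         (\<lambda>n::nat. (1/6) * (6 * real n) powr (1/3) * ln (real n))"
proof -
  define T where "T n = (1/6) * (6 * real n) powr (1/3) * ln (real n)" for n :: nat
  have limf: "((\<lambda>n. ln (real (wilf_count n)) / (2 * T n)) \<longlongrightarrow> 1) at_top"
  proof (rule squeeze[where Lq = "\<lambda>q n. real q * (((6 * real n) powr (1/3) / (real q + 4) - 1) * ln ((6 * real n) powr (1/3) / (real q + 4) - 1) - (6 * real n) powr (1/3) / (real q + 4))"
        and r = "\<lambda>q. real q * inverse (real q + 4)"])
    show "eventually (\<lambda>n. ln (real (wilf_count n)) \<le> ln ((6 * real n) powr (1/3) + 1) + (6 * real n) powr (1/3) + (6 * real n) powr (1/3) * ln (exp 2 * real n * (1 + ln (real n)) / ((6 * real n) powr (1/3)) ^ 2)) at_top"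
      using ev_Bf eventually_ge_at_top[of 1]
      by eventually_elim (rule wilf_count_upper, auto)
    show "((\<lambda>n. (ln ((6 * real n) powr (1/3) + 1) + (6 * real n) powr (1/3) + (6 * real n) powr (1/3) * ln (exp 2 * real n * (1 + ln (real n)) / ((6 * real n) powr (1/3)) ^ 2)) / (2 * T n)) \<longlongrightarrow> 1) at_top"
      unfolding T_def by (rule lim_Uf)
    show "eventually (\<lambda>n. 2 * T n > 0) at_top" using ev_T by eventually_elim (simp add: T_def mult.commute)
    show "eventually (\<lambda>n. real q * (((6 * real n) powr (1/3) / (real q + 4) - 1) * ln ((6 * real n) powr (1/3) / (real q + 4) - 1) - (6 * real n) powr (1/3) / (real q + 4)) \<le> ln (real (wilf_count n))) at_top"
      if "q \<ge> 1" for q using f_lower_ev[OF that] .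
    show "((\<lambda>n. real q * (((6 * real n) powr (1/3) / (real q + 4) - 1) * ln ((6 * real n) powr (1/3) / (real q + 4) - 1) - (6 * real n) powr (1/3) / (real q + 4)) / (2 * T n)) \<longlongrightarrow> real q * inverse (real q + 4)) at_top"
      if "q \<ge> 1" for q unfolding T_def by (rule lim_Lf) (use that in simp)
    show "((\<lambda>q. real q * inverse (real q + 4)) \<longlongrightarrow> 1) at_top" by (rule lim_r)
  qed
  have limF: "((\<lambda>n. ln (real (wilf_fixed_count n)) / T n) \<longlongrightarrow> 1) at_top"
  proof (rule squeeze[where Lq = "\<lambda>q n. real q * (((6 * real n) powr (1/3) / (2 * (real q + 3)) - 1) * ln ((6 * real n) powr (1/3) / (2 * (real q + 3)) - 1) - (6 * real n) powr (1/3) / (2 * (real q + 3)))"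
        and r = "\<lambda>q. 2 * (real q * inverse (2 * real q + 6))"])
    show "eventually (\<lambda>n. ln (real (wilf_fixed_count n)) \<le> 2 * ln ((6 * real n) powr (1/3) + 1) + (6 * real n) powr (1/3) + ((6 * real n) powr (1/3) / 2) * ln (4 * (exp 2 * real n * (1 + ln (real n))) / ((6 * real n) powr (1/3)) ^ 2)) at_top"
      using ev_gF eventually_ge_at_top[of 1]
      by eventually_elim (rule fixed_count_upper, auto)
    show "((\<lambda>n. (2 * ln ((6 * real n) powr (1/3) + 1) + (6 * real n) powr (1/3) + ((6 * real n) powr (1/3) / 2) * ln (4 * (exp 2 * real n * (1 + ln (real n))) / ((6 * real n) powr (1/3)) ^ 2)) / T n) \<longlongrightarrow> 1) at_top"
      unfolding T_def by (rule lim_UF)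
    show "eventually (\<lambda>n. T n > 0) at_top" using ev_T by (simp add: T_def)
    show "eventually (\<lambda>n. real q * (((6 * real n) powr (1/3) / (2 * (real q + 3)) - 1) * ln ((6 * real n) powr (1/3) / (2 * (real q + 3)) - 1) - (6 * real n) powr (1/3) / (2 * (real q + 3))) \<le> ln (real (wilf_fixed_count n))) at_top"
      if "q \<ge> 1" for q using F_lower_ev[OF that] .
    show "((\<lambda>n. real q * (((6 * real n) powr (1/3) / (2 * (real q + 3)) - 1) * ln ((6 * real n) powr (1/3) / (2 * (real q + 3)) - 1) - (6 * real n) powr (1/3) / (2 * (real q + 3))) / T n) \<longlongrightarrow> 2 * (real q * inverse (2 * real q + 6))) at_top"
      if "q \<ge> 1" for q unfolding T_def by (rule lim_LF) (use that in simp)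
    show "((\<lambda>q. 2 * (real q * inverse (2 * real q + 6))) \<longlongrightarrow> 1) at_top" by (rule lim_r2)
  qed
  have e1: "(\<lambda>n. ln (real (wilf_count n)) / 2) \<sim>[at_top] T"
  proof (rule asymp_equivI')
    have "(\<lambda>n. ln (real (wilf_count n)) / 2 / T n) = (\<lambda>n. ln (real (wilf_count n)) / (2 * T n))"
      by (simp add: divide_divide_eq_left)
    thus "((\<lambda>n. ln (real (wilf_count n)) / 2 / T n) \<longlongrightarrow> 1) at_top" using limf by simp
  qed
  have e2: "(\<lambda>n. ln (real (wilf_fixed_count n))) \<sim>[at_top] T"
    by (rule asymp_equivI'[OF limF])
  have e3: "(\<lambda>n. ln (real (wilf_fixed_count n))) \<sim>[at_top] (\<lambda>n. ln (real (wilf_count n)) / 2)"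
    using asymp_equiv_trans[OF e2 asymp_equiv_symI[OF e1]] .
  show ?thesis using e3 e1 unfolding T_def[abs_def] by simp
qed

end
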